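(* Let $G$ be a compact commutative group, and let $L^{2}(G)$ be the Banach algebra of square-integrable functions on $G$ with respect to normalized Haar measure, equipped with convolution product. Then for every character $\phi\in\Delta(L^{2}(G))$, the Banach algebra $L^{2}(G)$ is essentially left $\phi$-contractible.
   Context: For a Banach algebra $A$, $\Delta(A)$ denotes the set of all non-zero multiplicative linear functionals (characters) on $A$. A Banach $A$-bimodule $X$ is called neo-unital if $X=A\cdot X\cdot A$, i.e. every $x\in X$ can be written as $x=a\cdot y\cdot b$ with $a,b\in A$, $y\in X$. For $\phi\in\Delta(A)$, the Banach algebra $A$ is called essentially left $\phi$-contractible if for every neo-unital Banach $A$-bimodule $X$ whose right module action is $x\cdot a=\phi(a)x$ ($a\in A$, $x\in X$), every continuous derivation $D:A\to X$ is inner, i.e. there is $x_{0}\in X$ with $D(a)=a\cdot x_{0}-x_{0}\cdot a$ for all $a\in A$. *)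

theory Defs
  imports "HOL-Analysis.Analysis"
begin

definition normalized_haar :: "'a::{topological_ab_group_add,t2_space} measure \<Rightarrow> bool" where
  "normalized_haar \<mu> \<longleftrightarrow>
     sets \<mu> = sets borel \<and> space \<mu> = UNIV \<and> emeasure \<mu> UNIV = 1 \<and>
     (\<forall>A\<in>sets borel. \<forall>g. emeasure \<mu> ((\<lambda>x. g + x) ` A) = emeasure \<mu> A) \<and>
     (\<forall>A\<in>sets borel. emeasure \<mu> A = (INF U\<in>{U. open U \<and> A \<subseteq> U}. emeasure \<mu> U)) \<and>
     (\<forall>U. open U \<longrightarrow> emeasure \<mu> U = (SUP K\<in>{K. compact K \<and> K \<subseteq> U}. emeasure \<mu> K))"

text \<open>Elements of L^2(G) are represented by square-integrable complex functions
(representatives); the L^2 seminorm vanishes exactly on null functions.\<close>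

definition L2 :: "'a measure \<Rightarrow> ('a \<Rightarrow> complex) set" where
  "L2 \<mu> = {f. f \<in> borel_measurable \<mu> \<and> integrable \<mu> (\<lambda>x. (cmod (f x))\<^sup>2)}"

definition l2norm :: "'a measure \<Rightarrow> ('a \<Rightarrow> complex) \<Rightarrow> real" where
  "l2norm \<mu> f = sqrt (LINT x|\<mu>. (cmod (f x))\<^sup>2)"

definition conv :: "'a::ab_group_add measure \<Rightarrow> ('a \<Rightarrow> complex) \<Rightarrow> ('a \<Rightarrow> complex) \<Rightarrow> ('a \<Rightarrow> complex)" where
  "conv \<mu> f g = (\<lambda>x. LINT y|\<mu>. f y * g (x - y))"

definition is_character :: "'a::ab_group_add measure \<Rightarrow> (('a \<Rightarrow> complex) \<Rightarrow> complex) \<Rightarrow> bool" where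
  "is_character \<mu> \<phi> \<longleftrightarrow>
     (\<forall>f\<in>L2 \<mu>. \<forall>g\<in>L2 \<mu>. \<phi> (\<lambda>x. f x + g x) = \<phi> f + \<phi> g) \<and>
     (\<forall>f\<in>L2 \<mu>. \<forall>c. \<phi> (\<lambda>x. c * f x) = c * \<phi> f) \<and>
     (\<forall>f\<in>L2 \<mu>. \<forall>g\<in>L2 \<mu>. \<phi> (conv \<mu> f g) = \<phi> f * \<phi> g) \<and>
     (\<exists>f\<in>L2 \<mu>. \<phi> f \<noteq> 0)"

text \<open>The library has no class of complex normed spaces, so a complex Banach space is a
real Banach space together with a complex scalar multiplication extending the real one.\<close>

definition complex_scalar :: "(complex \<Rightarrow> 'x::banach \<Rightarrow> 'x) \<Rightarrow> bool" where
  "complex_scalar sm \<longleftrightarrow>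
     (\<forall>r x. sm (complex_of_real r) x = r *\<^sub>R x) \<and>
     (\<forall>a b x. sm (a * b) x = sm a (sm b x)) \<and>
     (\<forall>a x y. sm a (x + y) = sm a x + sm a y) \<and>
     (\<forall>a b x. sm (a + b) x = sm a x + sm b x) \<and>
     (\<forall>a x. norm (sm a x) = cmod a * norm x)"

text \<open>Banach L^2(G)-bimodule with left action lm and right action x.a = phi(a) x.\<close>

definition phi_bimodule ::
  "'a::ab_group_add measure \<Rightarrow> (('a \<Rightarrow> complex) \<Rightarrow> complex) \<Rightarrow> (complex \<Rightarrow> 'x::banach \<Rightarrow> 'x)
     \<Rightarrow> (('a \<Rightarrow> complex) \<Rightarrow> 'x \<Rightarrow> 'x) \<Rightarrow> bool" where
  "phi_bimodule \<mu> \<phi> sm lm \<longleftrightarrow>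
     (\<forall>f\<in>L2 \<mu>. \<forall>g\<in>L2 \<mu>. \<forall>x. lm (\<lambda>t. f t + g t) x = lm f x + lm g x) \<and>
     (\<forall>f\<in>L2 \<mu>. \<forall>c x. lm (\<lambda>t. c * f t) x = sm c (lm f x)) \<and>
     (\<forall>f\<in>L2 \<mu>. \<forall>x y. lm f (x + y) = lm f x + lm f y) \<and>
     (\<forall>f\<in>L2 \<mu>. \<forall>c x. lm f (sm c x) = sm c (lm f x)) \<and>
     (\<exists>C. \<forall>f\<in>L2 \<mu>. \<forall>x. norm (lm f x) \<le> C * l2norm \<mu> f * norm x) \<and>
     (\<forall>f\<in>L2 \<mu>. \<forall>g\<in>L2 \<mu>. \<forall>x. lm (conv \<mu> f g) x = lm f (lm g x)) \<and>
     (\<forall>f\<in>L2 \<mu>. \<forall>g\<in>L2 \<mu>. \<forall>x. sm (\<phi> g) (lm f x) = lm f (sm (\<phi> g) x))"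

text \<open>Neo-unital: every x is a.y.b with a, b in L^2(G).\<close>

definition neo_unital ::
  "'a measure \<Rightarrow> (('a \<Rightarrow> complex) \<Rightarrow> complex) \<Rightarrow> (complex \<Rightarrow> 'x \<Rightarrow> 'x)
     \<Rightarrow> (('a \<Rightarrow> complex) \<Rightarrow> 'x \<Rightarrow> 'x) \<Rightarrow> bool" where
  "neo_unital \<mu> \<phi> sm lm \<longleftrightarrow>
     (\<forall>x. \<exists>a\<in>L2 \<mu>. \<exists>b\<in>L2 \<mu>. \<exists>y. x = sm (\<phi> b) (lm a y))"

definition continuous_derivation ::
  "'a::ab_group_add measure \<Rightarrow> (('a \<Rightarrow> complex) \<Rightarrow> complex) \<Rightarrow> (complex \<Rightarrow> 'x::banach \<Rightarrow> 'x)
     \<Rightarrow> (('a \<Rightarrow> complex) \<Rightarrow> 'x \<Rightarrow> 'x) \<Rightarrow> (('a \<Rightarrow> complex) \<Rightarrow> 'x) \<Rightarrow> bool" where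
  "continuous_derivation \<mu> \<phi> sm lm D \<longleftrightarrow>
     (\<forall>f\<in>L2 \<mu>. \<forall>g\<in>L2 \<mu>. D (\<lambda>t. f t + g t) = D f + D g) \<and>
     (\<forall>f\<in>L2 \<mu>. \<forall>c. D (\<lambda>t. c * f t) = sm c (D f)) \<and>
     (\<exists>C. \<forall>f\<in>L2 \<mu>. norm (D f) \<le> C * l2norm \<mu> f) \<and>
     (\<forall>f\<in>L2 \<mu>. \<forall>g\<in>L2 \<mu>. D (conv \<mu> f g) = lm f (D g) + sm (\<phi> g) (D f))"

definition inner_derivation ::
  "'a measure \<Rightarrow> (('a \<Rightarrow> complex) \<Rightarrow> complex) \<Rightarrow> (complex \<Rightarrow> 'x::banach \<Rightarrow> 'x)
     \<Rightarrow> (('a \<Rightarrow> complex) \<Rightarrow> 'x \<Rightarrow> 'x) \<Rightarrow> (('a \<Rightarrow> complex) \<Rightarrow> 'x) \<Rightarrow> bool" where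
  "inner_derivation \<mu> \<phi> sm lm D \<longleftrightarrow>
     (\<exists>x0. \<forall>f\<in>L2 \<mu>. D f = lm f x0 - sm (\<phi> f) x0)"

text \<open>Essential left phi-contractibility of L^2(G), tested against all neo-unital Banach
bimodules whose underlying Banach space lives in the type 'x.\<close>

definition ess_left_phi_contractible ::
  "'x::banach itself \<Rightarrow> 'a::ab_group_add measure \<Rightarrow> (('a \<Rightarrow> complex) \<Rightarrow> complex) \<Rightarrow> bool" where
  "ess_left_phi_contractible _ \<mu> \<phi> \<longleftrightarrow>
     (\<forall>(sm :: complex \<Rightarrow> 'x \<Rightarrow> 'x) lm D.
        complex_scalar sm \<and> phi_bimodule \<mu> \<phi> sm lm \<and> neo_unital \<mu> \<phi> sm lm \<and>
        continuous_derivation \<mu> \<phi> sm lm D \<longrightarrow> inner_derivation \<mu> \<phi> sm lm D)"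

end

theory Submission
  imports Defs "HOL-Probability.Probability_Measure"
begin

locale haar_setting =
  fixes \<mu> :: "'a::{topological_ab_group_add,t2_space} measure"
  assumes cpt: "compact (UNIV :: 'a set)"
    and hr: "normalized_haar \<mu>"
begin

lemma sets_mu[simp, measurable_cong]: "sets \<mu> = sets borel"
  using hr unfolding normalized_haar_def by auto
lemma space_mu[simp]: "space \<mu> = UNIV"
  using hr unfolding normalized_haar_def by auto
lemma emeasure_UNIV: "emeasure \<mu> UNIV = 1"
  using hr unfolding normalized_haar_def by auto
lemma prob: "prob_space \<mu>"
  by (rule prob_spaceI) (simp add: emeasure_UNIV)
lemma finite_mu: "finite_measure \<mu>"
  using prob prob_space_def by blast
lemma inv_emeasure: "A \<in> sets borel \<Longrightarrow> emeasure \<mu> ((\<lambda>x. g + x) ` A) = emeasure \<mu> A"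
  using hr unfolding normalized_haar_def by auto
lemma outer_reg: "A \<in> sets borel \<Longrightarrow> emeasure \<mu> A = (INF U\<in>{U. open U \<and> A \<subseteq> U}. emeasure \<mu> U)"
  using hr unfolding normalized_haar_def by auto
lemma inner_reg: "open U \<Longrightarrow> emeasure \<mu> U = (SUP K\<in>{K. compact K \<and> K \<subseteq> U}. emeasure \<mu> K)"
  using hr unfolding normalized_haar_def by auto

lemma meas_mu_eq: "measurable \<mu> N = measurable borel N"
  by (rule measurable_cong_sets) simp_all
lemma meas_mu_eq2: "measurable N \<mu> = measurable N borel"
  by (rule measurable_cong_sets) simp_all
lemma meas_mu_iff: "f \<in> borel_measurable \<mu> \<longleftrightarrow> f \<in> borel_measurable borel"
  by (simp only: meas_mu_eq)

lemma cont_meas: "continuous_on UNIV f \<Longrightarrow> f \<in> borel_measurable \<mu>"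
  by (simp add: meas_mu_iff borel_measurable_continuous_onI)

lemma trans_meas[measurable]: "(\<lambda>y. y + t) \<in> measurable \<mu> \<mu>"
proof -
  have "(\<lambda>y::'a. y + t) \<in> borel_measurable borel"
    by (intro borel_measurable_continuous_onI continuous_intros)
  then show ?thesis by (simp only: meas_mu_eq meas_mu_eq2)
qed

lemma neg_meas[measurable]: "(\<lambda>y. - y) \<in> measurable \<mu> \<mu>"
proof -
  have "(\<lambda>y::'a. - y) \<in> borel_measurable borel"
    by (intro borel_measurable_continuous_onI continuous_intros)
  then show ?thesis by (simp only: meas_mu_eq meas_mu_eq2)
qed

lemma distr_trans: "distr \<mu> \<mu> (\<lambda>y. y + t) = \<mu>"
proof (rule measure_eqI)
  fix A assume A: "A \<in> sets (distr \<mu> \<mu> (\<lambda>y. y + t))"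
  then have Ab: "A \<in> sets borel" by simp
  have "(\<lambda>y. y + t) -` A \<inter> space \<mu> = (\<lambda>x. - t + x) ` A"
  proof (intro equalityI subsetI)
    fix y assume "y \<in> (\<lambda>y. y + t) -` A \<inter> space \<mu>"
    then have "y + t \<in> A" by simp
    moreover have "y = - t + (y + t)" by (simp add: algebra_simps)
    ultimately show "y \<in> (\<lambda>x. - t + x) ` A" by blast
  next
    fix y assume "y \<in> (\<lambda>x. - t + x) ` A"
    then obtain x where "x \<in> A" "y = - t + x" by blast
    then show "y \<in> (\<lambda>y. y + t) -` A \<inter> space \<mu>" by (simp add: algebra_simps)
  qed
  moreover have "emeasure \<mu> ((\<lambda>x. - t + x) ` A) = emeasure \<mu> A"
    by (rule inv_emeasure[OF Ab])
  ultimately show "emeasure (distr \<mu> \<mu> (\<lambda>y. y + t)) A = emeasure \<mu> A"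
    using emeasure_distr[OF trans_meas, of A] Ab by simp
qed simp

lemma integral_trans: "(\<integral>y. f (y + t) \<partial>\<mu>) = (\<integral>y. f y \<partial>\<mu>)"
  for f :: "'a \<Rightarrow> 'b::{banach,second_countable_topology}"
proof (cases "f \<in> borel_measurable \<mu>")
  case True
  have "integral\<^sup>L (distr \<mu> \<mu> (\<lambda>y. y + t)) f = (\<integral>y. f (y + t) \<partial>\<mu>)"
    by (rule integral_distr[OF trans_meas True])
  then show ?thesis by (simp only: distr_trans)
next
  case False
  have "\<not> integrable \<mu> f" using False borel_measurable_integrable by blast
  moreover have "\<not> integrable \<mu> (\<lambda>y. f (y + t))"
  proof
    assume "integrable \<mu> (\<lambda>y. f (y + t))"
    then have "(\<lambda>y. f (y + t)) \<in> borel_measurable \<mu>" by (rule borel_measurable_integrable)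
    from measurable_compose[OF trans_meas this]
    have "(\<lambda>y. f (y + - t + t)) \<in> borel_measurable \<mu>" .
    moreover have "(\<lambda>y. f (y + - t + t)) = f" by (simp add: algebra_simps)
    ultimately show False using False by simp
  qed
  ultimately show ?thesis by (simp add: not_integrable_integral_eq)
qed

end

lemma unif_cont:
  fixes k :: "'a::topological_ab_group_add \<Rightarrow> 'b::metric_space"
  assumes cpt: "compact (UNIV :: 'a set)" and k: "continuous_on UNIV k" and e: "e > 0"
  shows "\<exists>V. open V \<and> 0 \<in> V \<and> (\<forall>z. \<forall>v\<in>V. dist (k (z + v)) (k z) < e)"
proof -
  let ?F = "\<lambda>p::'a \<times> 'a. dist (k (snd p + fst p)) (k (snd p))"
  have c1: "continuous_on UNIV (\<lambda>p::'a \<times> 'a. k (snd p + fst p))"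
    by (rule continuous_on_compose2[OF k]) (auto intro!: continuous_intros)
  have c2: "continuous_on UNIV (\<lambda>p::'a \<times> 'a. k (snd p))"
    by (rule continuous_on_compose2[OF k]) (auto intro!: continuous_intros)
  have "continuous_on UNIV ?F"
    by (intro continuous_on_dist c1 c2)
  then have o: "open {p. ?F p < e}"
    by (rule open_Collect_less) (rule continuous_on_const)
  have s: "{0} \<times> UNIV \<subseteq> {p. ?F p < e}" using e by auto
  from Elementary_Topology.tube_lemma[OF cpt o s]
  obtain X0 where X: "0 \<in> X0" "open X0" "X0 \<times> UNIV \<subseteq> {p. ?F p < e}"
    by blast
  have "?F (v, z) < e" if "v \<in> X0" for v z using X(3) that by blast
  then show ?thesis using X by (intro exI[of _ X0]) auto
qed

lemma compact_nbhd:
  fixes K U :: "'a::topological_ab_group_add set"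
  assumes "compact K" "open U" "K \<subseteq> U"
  shows "\<exists>V. open V \<and> 0 \<in> V \<and> (\<forall>z\<in>K. \<forall>v\<in>V. z + v \<in> U)"
proof -
  have "continuous_on UNIV (\<lambda>p::'a \<times> 'a. snd p + fst p)"
    by (auto intro!: continuous_intros)
  then have o: "open ((\<lambda>p::'a \<times> 'a. snd p + fst p) -` U)"
    using assms(2) by (simp add: open_vimage)
  have s: "{0} \<times> K \<subseteq> (\<lambda>p::'a \<times> 'a. snd p + fst p) -` U" using assms(3) by auto
  from Elementary_Topology.tube_lemma[OF assms(1) o s]
  obtain X0 where "0 \<in> X0" "open X0" "X0 \<times> K \<subseteq> (\<lambda>p::'a \<times> 'a. snd p + fst p) -` U"
    by blast
  then show ?thesis by (intro exI[of _ X0]) auto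
qed

lemma partition_lemma:
  fixes V :: "'a::topological_ab_group_add set"
  assumes cpt: "compact (UNIV :: 'a set)" and V: "open V" "0 \<in> V"
  shows "\<exists>N (y::nat \<Rightarrow> 'a) B. (\<forall>j. B j \<in> sets borel) \<and> disjoint_family B \<and>
     (\<forall>x. \<exists>j<N. x \<in> B j) \<and> (\<forall>j. j \<ge> N \<longrightarrow> B j = {}) \<and> (\<forall>j b. b \<in> B j \<longrightarrow> b - y j \<in> V)"
proof -
  define T where "T y = (\<lambda>x. x - y) -` V" for y :: 'a
  have oT: "open (T y)" for y
    unfolding T_def using V(1) by (intro open_vimage) (auto intro!: continuous_intros)
  have "UNIV \<subseteq> (\<Union>y\<in>UNIV. T y)" using V(2) by (auto simp: T_def)
  then obtain Y where "finite Y" and cov: "UNIV \<subseteq> (\<Union>y\<in>Y. T y)"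
    using compactE_image[OF cpt, of UNIV T] oT by metis
  then obtain ys where ys: "set ys = Y" using finite_list by blast
  define N where "N = length ys"
  define y where "y j = ys ! j" for j
  define A where "A j = (if j < N then T (y j) else {})" for j
  define B where "B = disjointed A"
  have "B j \<in> sets borel" for j
  proof -
    have "A i \<in> sets borel" for i using oT by (auto simp: A_def)
    then show ?thesis unfolding B_def disjointed_def by auto
  qed
  moreover have "disjoint_family B" unfolding B_def by (rule disjoint_family_disjointed)
  moreover have "\<exists>j<N. x \<in> B j" for x
  proof -
    obtain z where "z \<in> Y" "x \<in> T z" using cov by blast
    then obtain i where i: "i < N" "y i = z" using ys unfolding N_def y_def by (metis in_set_conv_nth)
    then have "x \<in> (\<Union>i\<in>{0..<N}. A i)" using \<open>x \<in> T z\<close> by (auto simp: A_def)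
    then have "x \<in> (\<Union>i\<in>{0..<N}. B i)" unfolding B_def by (simp add: finite_UN_disjointed_eq)
    then show ?thesis by auto
  qed
  moreover have "\<forall>j. j \<ge> N \<longrightarrow> B j = {}"
    using disjointed_subset[of A] unfolding B_def A_def by fastforce
  moreover have "\<forall>j b. b \<in> B j \<longrightarrow> b - y j \<in> V"
  proof (intro allI impI)
    fix j b assume "b \<in> B j"
    then have "b \<in> A j" using disjointed_subset[of A j] unfolding B_def by blast
    then show "b - y j \<in> V" unfolding A_def T_def by (auto split: if_splits)
  qed
  ultimately show ?thesis by blast
qed


lemma contI_open:
  fixes g :: "'a::t2_space \<Rightarrow> 'b::metric_space"
  assumes "\<And>x e. e > 0 \<Longrightarrow> \<exists>U. open U \<and> x \<in> U \<and> (\<forall>y\<in>U. dist (g y) (g x) < e)"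
  shows "continuous_on UNIV g"
proof -
  have "isCont g x" for x
    unfolding continuous_at tendsto_iff
  proof (intro allI impI)
    fix e :: real assume "e > 0"
    then obtain U where "open U" "x \<in> U" "\<forall>y\<in>U. dist (g y) (g x) < e" using assms by blast
    then show "eventually (\<lambda>y. dist (g y) (g x) < e) (at x)"
      unfolding eventually_at_topological by blast
  qed
  then show ?thesis by (simp add: continuous_on_eq_continuous_at)
qed

lemma cont_bounded:
  fixes k :: "'a::topological_space \<Rightarrow> 'b::real_normed_vector"
  assumes "compact (UNIV :: 'a set)" "continuous_on UNIV k"
  shows "\<exists>B. \<forall>x. norm (k x) \<le> B"
proof -
  have "compact (range k)" by (rule compact_continuous_image[OF assms(2,1)])
  then have "bounded (range k)" by (rule compact_imp_bounded)
  then show ?thesis unfolding bounded_iff by blast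
qed

lemma le_1_plus_sq: "(x::real) \<le> 1 + x\<^sup>2"
proof (cases "x \<le> 1")
  case True then show ?thesis using zero_le_power2[of x] by linarith
next
  case False
  then have "x * 1 \<le> x * x" by (intro mult_left_mono) auto
  then show ?thesis by (simp add: power2_eq_square)
qed

context haar_setting
begin

lemma bounded_integrable:
  fixes f :: "'a \<Rightarrow> 'b::{banach,second_countable_topology}"
  assumes "f \<in> borel_measurable \<mu>" "\<And>x. norm (f x) \<le> B"
  shows "integrable \<mu> f"
  using finite_measure.integrable_const_bound[OF finite_mu, of f B] assms by simp

lemma L2_meas: "f \<in> L2 \<mu> \<Longrightarrow> f \<in> borel_measurable \<mu>"
  unfolding L2_def by simp

lemma L2_sq: "f \<in> L2 \<mu> \<Longrightarrow> integrable \<mu> (\<lambda>x. (cmod (f x))\<^sup>2)"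
  unfolding L2_def by simp

lemma L2_integrable: assumes "f \<in> L2 \<mu>" shows "integrable \<mu> f"
proof -
  have i0: "integrable \<mu> (\<lambda>x. 1::real)" by (rule finite_measure.integrable_const[OF finite_mu])
  have i1: "integrable \<mu> (\<lambda>x. 1 + (cmod (f x))\<^sup>2)"
    by (rule Bochner_Integration.integrable_add[OF i0 L2_sq[OF assms]])
  have "norm (f x) \<le> norm (1 + (cmod (f x))\<^sup>2)" for x
  proof -
    have "cmod (f x) \<le> 1 + (cmod (f x))\<^sup>2" by (rule le_1_plus_sq)
    then show ?thesis by simp
  qed
  then show ?thesis using Bochner_Integration.integrable_bound[OF i1 L2_meas[OF assms]] by simp
qed

lemma bounded_L2:
  assumes "f \<in> borel_measurable \<mu>" "\<And>x. cmod (f x) \<le> B"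
  shows "f \<in> L2 \<mu>"
proof -
  have "(\<lambda>x. (cmod (f x))\<^sup>2) \<in> borel_measurable \<mu>" using assms(1) by measurable
  moreover have "norm ((cmod (f x))\<^sup>2) \<le> B\<^sup>2" for x
    using assms(2)[of x] by (simp add: abs_le_square_iff power_mono)
  ultimately have "integrable \<mu> (\<lambda>x. (cmod (f x))\<^sup>2)" by (rule bounded_integrable)
  then show ?thesis using assms(1) unfolding L2_def by simp
qed

lemma cont_L2: assumes "continuous_on UNIV f" shows "f \<in> L2 \<mu>"
proof -
  obtain B where "\<And>x. cmod (f x) \<le> B" using cont_bounded[OF cpt assms] by blast
  then show ?thesis using bounded_L2 cont_meas[OF assms] by blast
qed

lemma L2_add: assumes "f \<in> L2 \<mu>" "g \<in> L2 \<mu>" shows "(\<lambda>x. f x + g x) \<in> L2 \<mu>"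
proof -
  have m: "(\<lambda>x. f x + g x) \<in> borel_measurable \<mu>" using L2_meas[OF assms(1)] L2_meas[OF assms(2)] by measurable
  have i: "integrable \<mu> (\<lambda>x. 2 * (cmod (f x))\<^sup>2 + 2 * (cmod (g x))\<^sup>2)"
    using L2_sq[OF assms(1)] L2_sq[OF assms(2)] by simp
  have "norm ((cmod (f x + g x))\<^sup>2) \<le> norm (2 * (cmod (f x))\<^sup>2 + 2 * (cmod (g x))\<^sup>2)" for x
  proof -
    have "cmod (f x + g x) \<le> cmod (f x) + cmod (g x)" by (rule norm_triangle_ineq)
    then have "(cmod (f x + g x))\<^sup>2 \<le> (cmod (f x) + cmod (g x))\<^sup>2" by (simp add: power_mono)
    also have "\<dots> \<le> 2 * (cmod (f x))\<^sup>2 + 2 * (cmod (g x))\<^sup>2"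
      by (smt (verit) power2_sum sum_squares_bound)
    finally show ?thesis by simp
  qed
  note bnd = this
  have m2: "(\<lambda>x. (cmod (f x + g x))\<^sup>2) \<in> borel_measurable \<mu>" using m by measurable
  have "integrable \<mu> (\<lambda>x. (cmod (f x + g x))\<^sup>2)"
    by (rule Bochner_Integration.integrable_bound[OF i m2]) (rule AE_I2, rule bnd)
  then show ?thesis using m unfolding L2_def by simp
qed

lemma L2_cmult: assumes "f \<in> L2 \<mu>" shows "(\<lambda>x. c * f x) \<in> L2 \<mu>"
proof -
  have m: "(\<lambda>x. c * f x) \<in> borel_measurable \<mu>" using L2_meas[OF assms] by measurable
  have "integrable \<mu> (\<lambda>x. (cmod c)\<^sup>2 * (cmod (f x))\<^sup>2)" using L2_sq[OF assms] by simp
  then have "integrable \<mu> (\<lambda>x. (cmod (c * f x))\<^sup>2)" by (simp add: norm_mult power_mult_distrib)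
  then show ?thesis using m unfolding L2_def by simp
qed

lemma integrable_trans_iff:
  fixes f :: "'a \<Rightarrow> 'b::{banach,second_countable_topology}"
  shows "integrable \<mu> (\<lambda>y. f (y + t)) \<longleftrightarrow> integrable \<mu> f"
proof
  assume "integrable \<mu> f"
  then have "integrable (distr \<mu> \<mu> (\<lambda>y. y + t)) f" by (simp only: distr_trans)
  then show "integrable \<mu> (\<lambda>y. f (y + t))" by (rule integrable_distr[OF trans_meas])
next
  assume "integrable \<mu> (\<lambda>y. f (y + t))"
  then have "integrable (distr \<mu> \<mu> (\<lambda>y. y + - t)) (\<lambda>y. f (y + t))" by (simp only: distr_trans)
  then have "integrable \<mu> (\<lambda>y. f (y + - t + t))" by (rule integrable_distr[OF trans_meas])
  then show "integrable \<mu> f" by simp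
qed

lemma meas_trans: "f \<in> borel_measurable \<mu> \<Longrightarrow> (\<lambda>y. f (y + t)) \<in> borel_measurable \<mu>"
  using measurable_compose[OF trans_meas] by blast

lemma L2_trans: assumes "f \<in> L2 \<mu>" shows "(\<lambda>y. f (y + t)) \<in> L2 \<mu>"
proof -
  have "integrable \<mu> (\<lambda>y. (cmod (f (y + t)))\<^sup>2)"
    using L2_sq[OF assms] integrable_trans_iff[of "\<lambda>y. (cmod (f y))\<^sup>2" t] by simp
  then show ?thesis using meas_trans[OF L2_meas[OF assms]] unfolding L2_def by simp
qed

lemma conv_integrable:
  fixes f k :: "'a \<Rightarrow> complex"
  assumes f: "integrable \<mu> f" and k: "continuous_on UNIV k"
  shows "integrable \<mu> (\<lambda>y. f y * k (x - y))"
proof -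
  have kc: "continuous_on UNIV (\<lambda>y. k (x - y))"
    by (rule continuous_on_compose2[OF k]) (auto intro!: continuous_intros)
  obtain B where B: "\<And>z. cmod (k z) \<le> B" using cont_bounded[OF cpt k] by blast
  have m: "(\<lambda>y. f y * k (x - y)) \<in> borel_measurable \<mu>"
    using borel_measurable_integrable[OF f] cont_meas[OF kc] by (rule borel_measurable_times)
  have i: "integrable \<mu> (\<lambda>y. B * cmod (f y))" using f by simp
  have "norm (f y * k (x - y)) \<le> norm (B * cmod (f y))" for y
  proof -
    have "norm (f y * k (x - y)) = cmod (f y) * cmod (k (x - y))" by (simp add: norm_mult)
    also have "\<dots> \<le> cmod (f y) * B" using B[of "x - y"] by (simp add: mult_left_mono)
    also have "\<dots> \<le> norm (B * cmod (f y))" by (metis abs_ge_self mult.commute real_norm_def)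
    finally show ?thesis .
  qed
  then show ?thesis using Bochner_Integration.integrable_bound[OF i m] by simp
qed

lemma conv_bound:
  fixes f k :: "'a \<Rightarrow> complex"
  assumes f: "integrable \<mu> f" and k: "continuous_on UNIV k" and B: "\<And>z. cmod (k z) \<le> B"
  shows "cmod (conv \<mu> f k x) \<le> (\<integral>y. cmod (f y) \<partial>\<mu>) * B"
proof -
  have "cmod (conv \<mu> f k x) \<le> (\<integral>y. cmod (f y * k (x - y)) \<partial>\<mu>)"
    unfolding conv_def by (rule Bochner_Integration.integral_norm_bound)
  also have "\<dots> \<le> (\<integral>y. cmod (f y) * B \<partial>\<mu>)"
  proof (rule Bochner_Integration.integral_mono)
    show "integrable \<mu> (\<lambda>y. cmod (f y * k (x - y)))"
      using conv_integrable[OF f k] by simp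
    show "integrable \<mu> (\<lambda>y. cmod (f y) * B)" using f by simp
    fix y show "cmod (f y * k (x - y)) \<le> cmod (f y) * B"
      using B[of "x - y"] by (simp add: norm_mult mult_left_mono)
  qed
  also have "\<dots> = (\<integral>y. cmod (f y) \<partial>\<mu>) * B" by simp
  finally show ?thesis .
qed

lemma conv_cont:
  fixes f k :: "'a \<Rightarrow> complex"
  assumes f: "integrable \<mu> f" and k: "continuous_on UNIV k"
  shows "continuous_on UNIV (conv \<mu> f k)"
proof (rule contI_open)
  fix x and e :: real assume e: "e > 0"
  define I where "I = (\<integral>y. cmod (f y) \<partial>\<mu>)"
  have I0: "I \<ge> 0" unfolding I_def by simp
  define e' where "e' = e / (2 * (I + 1))"
  have e': "e' > 0" using e I0 by (simp add: e'_def)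
  obtain V where V: "open V" "0 \<in> V" "\<And>z v. v \<in> V \<Longrightarrow> dist (k (z + v)) (k z) < e'"
    using unif_cont[OF cpt k e'] by blast
  define U where "U = (\<lambda>y. y - x) -` V"
  have "open U" unfolding U_def using V(1) by (intro open_vimage) (auto intro!: continuous_intros)
  moreover have "x \<in> U" using V(2) by (simp add: U_def)
  moreover have "dist (conv \<mu> f k x') (conv \<mu> f k x) < e" if "x' \<in> U" for x'
  proof -
    define v where "v = x' - x"
    have v: "v \<in> V" using that by (simp add: U_def v_def)
    have x': "x' = x + v" by (simp add: v_def)
    have "conv \<mu> f k x' - conv \<mu> f k x = (\<integral>y. f y * (k (x' - y) - k (x - y)) \<partial>\<mu>)"
      unfolding conv_def using conv_integrable[OF f k, of x'] conv_integrable[OF f k, of x]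
      by (simp add: right_diff_distrib)
    then have "dist (conv \<mu> f k x') (conv \<mu> f k x) \<le> (\<integral>y. cmod (f y * (k (x' - y) - k (x - y))) \<partial>\<mu>)"
      by (simp add: dist_norm)
    also have "\<dots> \<le> (\<integral>y. cmod (f y) * e' \<partial>\<mu>)"
    proof (rule Bochner_Integration.integral_mono)
      show "integrable \<mu> (\<lambda>y. cmod (f y * (k (x' - y) - k (x - y))))"
        using conv_integrable[OF f k, of x'] conv_integrable[OF f k, of x]
        by (simp add: right_diff_distrib)
      show "integrable \<mu> (\<lambda>y. cmod (f y) * e')" using f by simp
      fix y
      have "dist (k ((x - y) + v)) (k (x - y)) < e'" by (rule V(3)[OF v])
      moreover have "(x - y) + v = x' - y" by (simp add: x' algebra_simps)
      ultimately have "cmod (k (x' - y) - k (x - y)) \<le> e'" by (simp add: dist_norm)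
      then show "cmod (f y * (k (x' - y) - k (x - y))) \<le> cmod (f y) * e'"
        by (simp add: norm_mult mult_left_mono)
    qed
    also have "\<dots> = I * e'" by (simp add: I_def)
    also have "\<dots> < e"
    proof -
      have eq: "I * e' = e * (I / (2 * (I + 1)))" by (simp add: e'_def field_simps)
      have "I / (2 * (I + 1)) < 1" using I0 by (simp add: field_simps)
      then have "e * (I / (2 * (I + 1))) < e * 1" using e by (rule mult_strict_left_mono)
      then show ?thesis using eq by simp
    qed
    finally show ?thesis .
  qed
  ultimately show "\<exists>U. open U \<and> x \<in> U \<and> (\<forall>y\<in>U. dist (conv \<mu> f k y) (conv \<mu> f k x) < e)" by blast
qed

end

context haar_setting
begin

lemma measure_UNIV: "measure \<mu> UNIV = 1"
  by (simp add: measure_def emeasure_UNIV)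

lemma integral_const_mu: "(\<integral>x. c \<partial>\<mu>) = (c :: 'b::{banach,second_countable_topology})"
  by (simp add: measure_UNIV)

lemma integrable_const_mu: "integrable \<mu> (\<lambda>x. c :: 'b::{banach,second_countable_topology})"
  by (rule finite_measure.integrable_const[OF finite_mu])

lemma integral_cmod_le:
  fixes f :: "'a \<Rightarrow> complex"
  assumes "integrable \<mu> f" "\<And>x. cmod (f x) \<le> B"
  shows "(\<integral>x. cmod (f x) \<partial>\<mu>) \<le> B"
proof -
  have "(\<integral>x. cmod (f x) \<partial>\<mu>) \<le> (\<integral>x. B \<partial>\<mu>)"
    by (rule Bochner_Integration.integral_mono) (use assms integrable_const_mu in auto)
  then show ?thesis by (simp add: measure_UNIV)
qed

end

locale char_setting = haar_setting \<mu> for \<mu> :: "'a::{topological_ab_group_add,t2_space} measure" +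
  fixes \<phi> :: "('a \<Rightarrow> complex) \<Rightarrow> complex"
  assumes chr: "is_character \<mu> \<phi>"
begin

lemma phi_add: "f \<in> L2 \<mu> \<Longrightarrow> g \<in> L2 \<mu> \<Longrightarrow> \<phi> (\<lambda>x. f x + g x) = \<phi> f + \<phi> g"
  using chr unfolding is_character_def by blast
lemma phi_cmult: "f \<in> L2 \<mu> \<Longrightarrow> \<phi> (\<lambda>x. c * f x) = c * \<phi> f"
  using chr unfolding is_character_def by blast
lemma phi_mult: "f \<in> L2 \<mu> \<Longrightarrow> g \<in> L2 \<mu> \<Longrightarrow> \<phi> (conv \<mu> f g) = \<phi> f * \<phi> g"
  using chr unfolding is_character_def by blast
lemma phi_nz: "\<exists>f\<in>L2 \<mu>. \<phi> f \<noteq> 0"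
  using chr unfolding is_character_def by blast

lemma phi_diff: assumes "f \<in> L2 \<mu>" "g \<in> L2 \<mu>" shows "\<phi> (\<lambda>x. f x - g x) = \<phi> f - \<phi> g"
proof -
  have "\<phi> (\<lambda>x. f x + (-1) * g x) = \<phi> f + \<phi> (\<lambda>x. (-1) * g x)"
    by (rule phi_add[OF assms(1) L2_cmult[OF assms(2)]])
  also have "\<phi> (\<lambda>x. (-1) * g x) = - \<phi> g" using phi_cmult[OF assms(2), of "-1"] by simp
  finally show ?thesis by simp
qed

lemma L2_zero: "(\<lambda>x. 0) \<in> L2 \<mu>" by (rule cont_L2) (rule continuous_on_const)

lemma phi_zero: "\<phi> (\<lambda>x. 0) = 0"
  using phi_cmult[OF L2_zero, of 0] by simp

lemma L2_sum: "finite S \<Longrightarrow> (\<And>j. j \<in> S \<Longrightarrow> F j \<in> L2 \<mu>) \<Longrightarrow> (\<lambda>x. \<Sum>j\<in>S. F j x) \<in> L2 \<mu>"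
proof (induction S rule: finite_induct)
  case empty then show ?case using L2_zero by simp
next
  case (insert a S)
  then show ?case using L2_add[of "F a" "\<lambda>x. \<Sum>j\<in>S. F j x"] by simp
qed

lemma phi_sum: "finite S \<Longrightarrow> (\<And>j. j \<in> S \<Longrightarrow> F j \<in> L2 \<mu>) \<Longrightarrow> \<phi> (\<lambda>x. \<Sum>j\<in>S. F j x) = (\<Sum>j\<in>S. \<phi> (F j))"
proof (induction S rule: finite_induct)
  case empty then show ?case using phi_zero by simp
next
  case (insert a S)
  have "\<phi> (\<lambda>x. \<Sum>j\<in>insert a S. F j x) = \<phi> (\<lambda>x. F a x + (\<Sum>j\<in>S. F j x))"
    using insert.hyps by simp
  also have "\<dots> = \<phi> (F a) + \<phi> (\<lambda>x. \<Sum>j\<in>S. F j x)"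
    using insert.prems L2_sum[OF insert.hyps(1), of F] by (intro phi_add) auto
  finally show ?case using insert by simp
qed

lemma neumann:
  assumes k: "continuous_on UNIV k" and kb: "\<And>x. cmod (k x) \<le> r" and r1: "r < 1"
  shows "\<phi> k \<noteq> 1"
proof
  assume phik: "\<phi> k = 1"
  have r0: "0 \<le> r" using kb[of undefined] norm_ge_zero order_trans by blast
  define p where "p = rec_nat k (\<lambda>n q. conv \<mu> q k)"
  have p0: "p 0 = k" by (simp add: p_def)
  have pS: "p (Suc n) = conv \<mu> (p n) k" for n by (simp add: p_def)
  have pp: "continuous_on UNIV (p n) \<and> (\<forall>x. cmod (p n x) \<le> r ^ Suc n)" for n
  proof (induction n)
    case 0 then show ?case using k kb by (simp add: p0)
  next
    case (Suc n)
    then have c: "continuous_on UNIV (p n)" and b: "\<And>x. cmod (p n x) \<le> r ^ Suc n" by auto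
    have i: "integrable \<mu> (p n)" by (rule L2_integrable[OF cont_L2[OF c]])
    have "continuous_on UNIV (p (Suc n))" unfolding pS by (rule conv_cont[OF i k])
    moreover have "cmod (p (Suc n) x) \<le> r ^ Suc (Suc n)" for x
    proof -
      have "cmod (p (Suc n) x) \<le> (\<integral>y. cmod (p n y) \<partial>\<mu>) * r" unfolding pS by (rule conv_bound[OF i k kb])
      also have "\<dots> \<le> r ^ Suc n * r"
        by (rule mult_right_mono[OF integral_cmod_le[OF i b] r0])
      finally show ?thesis by (simp add: mult.commute)
    qed
    ultimately show ?case by blast
  qed
  have pc: "continuous_on UNIV (p n)" for n using pp by blast
  have pb: "cmod (p n x) \<le> r ^ Suc n" for n x using pp by blast
  have pi: "integrable \<mu> (p n)" for n by (rule L2_integrable[OF cont_L2[OF pc]])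
  have sg: "summable (\<lambda>n. r ^ Suc n)"
    using summable_mult[OF summable_geometric[of r], of r] r0 r1 by (simp add: power_Suc)
  have sp: "summable (\<lambda>n. p n x)" for x
    by (rule summable_comparison_test'[OF sg]) (use pb in simp)
  define c where "c x = (\<Sum>n. p n x)" for x
  have cm: "c \<in> borel_measurable \<mu>"
  proof (rule borel_measurable_LIMSEQ_metric)
    show "(\<lambda>x. \<Sum>i<n. p i x) \<in> borel_measurable \<mu>" for n
      using cont_meas[OF pc] by (intro borel_measurable_sum) auto
    show "(\<lambda>n. \<Sum>i<n. p i x) \<longlonglongrightarrow> c x" for x
      unfolding c_def by (rule summable_LIMSEQ[OF sp])
  qed
  have cb: "cmod (c x) \<le> (\<Sum>n. r ^ Suc n)" for x
  proof -
    have sn: "summable (\<lambda>n. cmod (p n x))"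
      by (rule summable_comparison_test'[OF sg]) (use pb in simp)
    have "cmod (c x) \<le> (\<Sum>n. cmod (p n x))" unfolding c_def by (rule summable_norm[OF sn])
    also have "\<dots> \<le> (\<Sum>n. r ^ Suc n)" by (rule suminf_le[OF _ sn sg]) (use pb in simp)
    finally show ?thesis .
  qed
  have cL: "c \<in> L2 \<mu>" by (rule bounded_L2[OF cm cb])
  have kL: "k \<in> L2 \<mu>" by (rule cont_L2[OF k])
  have kb': "cmod (k (x - y)) \<le> r" for x y using kb by blast
  have pk: "cmod (p n y * k (x - y)) \<le> r ^ Suc n * r" for n x y
    using mult_mono[OF pb kb' zero_le_power[OF r0] norm_ge_zero] by (simp add: norm_mult)
  have convc: "conv \<mu> c k x = c x - k x" for x
  proof -
    have "conv \<mu> c k x = (\<integral>y. (\<Sum>n. p n y * k (x - y)) \<partial>\<mu>)"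
      unfolding conv_def c_def by (simp add: suminf_mult2[OF sp])
    also have "\<dots> = (\<Sum>n. (\<integral>y. p n y * k (x - y) \<partial>\<mu>))"
    proof (rule integral_suminf)
      show "integrable \<mu> (\<lambda>y. p n y * k (x - y))" for n by (rule conv_integrable[OF pi k])
      have "summable (\<lambda>n. cmod (p n y * k (x - y)))" for y
      proof (rule summable_comparison_test'[OF summable_mult2[OF sg, of r]])
        fix n show "norm (cmod (p n y * k (x - y))) \<le> r ^ Suc n * r"
          using pk by simp
      qed
      then show "AE y in \<mu>. summable (\<lambda>n. cmod (p n y * k (x - y)))" by simp
      show "summable (\<lambda>n. \<integral>y. cmod (p n y * k (x - y)) \<partial>\<mu>)"
      proof (rule summable_comparison_test'[OF summable_mult2[OF sg, of r]])
        fix n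
        have "(\<integral>y. cmod (p n y * k (x - y)) \<partial>\<mu>) \<le> r ^ Suc n * r"
          by (rule integral_cmod_le[OF conv_integrable[OF pi k]])
             (rule pk)
        moreover have "0 \<le> (\<integral>y. cmod (p n y * k (x - y)) \<partial>\<mu>)" by simp
        ultimately show "norm (\<integral>y. cmod (p n y * k (x - y)) \<partial>\<mu>) \<le> r ^ Suc n * r" by simp
      qed
    qed
    also have "\<dots> = (\<Sum>n. p (Suc n) x)" by (simp add: pS conv_def)
    also have "\<dots> = c x - p 0 x" unfolding c_def by (rule suminf_split_head[OF sp])
    finally show ?thesis by (simp add: p0)
  qed
  have "\<phi> (conv \<mu> c k) = \<phi> c * \<phi> k" by (rule phi_mult[OF cL kL])
  moreover have "\<phi> (conv \<mu> c k) = \<phi> c - \<phi> k"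
  proof -
    have ce: "conv \<mu> c k = (\<lambda>x. c x - k x)" by (rule ext) (rule convc)
    show ?thesis unfolding ce by (rule phi_diff[OF cL kL])
  qed
  ultimately show False using phik by simp
qed

lemma phi_bound:
  assumes k: "continuous_on UNIV k" and kb: "\<And>x. cmod (k x) \<le> s"
  shows "cmod (\<phi> k) \<le> s"
proof (rule ccontr)
  assume "\<not> cmod (\<phi> k) \<le> s"
  then have gt: "cmod (\<phi> k) > s" by simp
  have s0: "0 \<le> s" using kb[of undefined] norm_ge_zero order_trans by blast
  define a where "a = \<phi> k"
  have a0: "a \<noteq> 0" using gt s0 by (auto simp: a_def)
  define k' where "k' x = (1 / a) * k x" for x
  have k'c: "continuous_on UNIV k'" unfolding k'_def by (intro continuous_intros k)
  have "\<phi> k' = (1 / a) * \<phi> k" unfolding k'_def by (rule phi_cmult[OF cont_L2[OF k]])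
  then have "\<phi> k' = 1" using a0 by (simp add: a_def)
  moreover have "cmod (k' x) \<le> s / cmod a" for x
    using kb[of x] a0 by (simp add: k'_def norm_mult norm_divide divide_right_mono)
  moreover have "s / cmod a < 1" using gt a0 by (simp add: a_def)
  ultimately show False using neumann[OF k'c] by blast
qed

end

lemma small_le_zero:
  fixes a C :: real
  assumes "C \<ge> 0" "\<And>e. e > 0 \<Longrightarrow> a \<le> e * C"
  shows "a \<le> 0"
proof (rule ccontr)
  assume "\<not> a \<le> 0"
  then have a: "a > 0" by simp
  have "a \<le> (a / (C + 1)) * C" using assms(2)[of "a / (C + 1)"] a assms(1) by simp
  also have "\<dots> < a" using a assms(1) by (simp add: field_simps)
  finally show False by simp
qed

lemma sum_indicator_pick:
  fixes g :: "nat \<Rightarrow> 'b::real_vector"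
  assumes "disjoint_family B" "z \<in> B j" "j < N"
  shows "(\<Sum>i<N. indicator (B i) z *\<^sub>R g i) = g j"
proof -
  have "indicator (B i) z = (if i = j then 1 else (0::real))" for i
    using assms(1,2) unfolding disjoint_family_on_def indicator_def by auto
  then have "(\<Sum>i<N. indicator (B i) z *\<^sub>R g i) = (\<Sum>i<N. (if i = j then g i else 0))"
    by (intro sum.cong) auto
  also have "\<dots> = g j" using assms(3) by simp
  finally show ?thesis .
qed

context haar_setting
begin

lemma int_mult_bounded:
  fixes f g :: "'a \<Rightarrow> complex"
  assumes f: "integrable \<mu> f" and g: "g \<in> borel_measurable \<mu>" and B: "\<And>z. cmod (g z) \<le> B"
  shows "integrable \<mu> (\<lambda>z. f z * g z)"
proof -
  have m: "(\<lambda>z. f z * g z) \<in> borel_measurable \<mu>"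
    using borel_measurable_integrable[OF f] g by (rule borel_measurable_times)
  have i: "integrable \<mu> (\<lambda>y. B * cmod (f y))" using f by simp
  have "norm (f y * g y) \<le> norm (B * cmod (f y))" for y
  proof -
    have "norm (f y * g y) = cmod (f y) * cmod (g y)" by (simp add: norm_mult)
    also have "\<dots> \<le> cmod (f y) * B" using B[of y] by (simp add: mult_left_mono)
    also have "\<dots> \<le> norm (B * cmod (f y))" by (metis abs_ge_self mult.commute real_norm_def)
    finally show ?thesis .
  qed
  then show ?thesis using Bochner_Integration.integrable_bound[OF i m] by simp
qed

lemma tr_L2: "f \<in> L2 \<mu> \<Longrightarrow> (\<lambda>t. f (t - x)) \<in> L2 \<mu>"
  using L2_trans[of f "- x"] by simp

end

locale char_h = char_setting \<mu> \<phi> for \<mu> :: "'a::{topological_ab_group_add,t2_space} measure" and \<phi> +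
  fixes h :: "'a \<Rightarrow> complex"
  assumes hc: "continuous_on UNIV h" and hn: "\<phi> h \<noteq> 0"
begin

definition psi :: "'a \<Rightarrow> complex" where "psi x = \<phi> (\<lambda>t. h (t - x)) / \<phi> h"

lemma hL: "h \<in> L2 \<mu>" by (rule cont_L2[OF hc])

lemma trh_cont: "continuous_on UNIV (\<lambda>t. h (t - x))"
  by (rule continuous_on_compose2[OF hc]) (auto intro!: continuous_intros)

lemma conv_tr:
  assumes f: "f \<in> L2 \<mu>"
  shows "conv \<mu> (\<lambda>t. f (t - x)) h = conv \<mu> f (\<lambda>t. h (t - x))"
proof (rule ext)
  fix s
  define G where "G z = f z * h (s - x - z)" for z
  have "conv \<mu> (\<lambda>t. f (t - x)) h s = (\<integral>y. G (y + - x) \<partial>\<mu>)"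
    unfolding conv_def G_def by (simp add: algebra_simps)
  also have "\<dots> = (\<integral>y. G y \<partial>\<mu>)" by (rule integral_trans)
  also have "\<dots> = conv \<mu> f (\<lambda>t. h (t - x)) s"
    unfolding conv_def G_def by (simp add: algebra_simps)
  finally show "conv \<mu> (\<lambda>t. f (t - x)) h s = conv \<mu> f (\<lambda>t. h (t - x)) s" .
qed

lemma phi_trh: "\<phi> (\<lambda>t. h (t - x)) = psi x * \<phi> h"
  using hn by (simp add: psi_def)

lemma phi_tr:
  assumes f: "f \<in> L2 \<mu>"
  shows "\<phi> (\<lambda>t. f (t - x)) = psi x * \<phi> f"
proof -
  have "\<phi> (\<lambda>t. f (t - x)) * \<phi> h = \<phi> (conv \<mu> (\<lambda>t. f (t - x)) h)"
    by (rule phi_mult[OF tr_L2[OF f] hL, symmetric])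
  also have "\<dots> = \<phi> (conv \<mu> f (\<lambda>t. h (t - x)))" by (simp add: conv_tr[OF f])
  also have "\<dots> = \<phi> f * \<phi> (\<lambda>t. h (t - x))" by (rule phi_mult[OF f tr_L2[OF hL]])
  also have "\<dots> = psi x * \<phi> f * \<phi> h" by (simp add: phi_trh)
  finally show ?thesis using hn by simp
qed

lemma psi0: "psi 0 = 1"
  using hn by (simp add: psi_def)

lemma psi_add: "psi (x + y) = psi x * psi y"
proof -
  have "psi (x + y) * \<phi> h = \<phi> (\<lambda>t. h (t - (x + y)))" by (simp add: phi_trh)
  also have "(\<lambda>t. h (t - (x + y))) = (\<lambda>t. (\<lambda>s. h (s - y)) (t - x))" by (simp add: algebra_simps)
  also have "\<phi> \<dots> = psi x * \<phi> (\<lambda>s. h (s - y))" by (rule phi_tr[OF tr_L2[OF hL]])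
  also have "\<dots> = psi x * psi y * \<phi> h" by (simp add: phi_trh)
  finally show ?thesis using hn by simp
qed

lemma psi_cont: "continuous_on UNIV psi"
proof (rule contI_open)
  fix x and e :: real assume e: "e > 0"
  define e' where "e' = e * cmod (\<phi> h) / 2"
  have e': "e' > 0" using e hn by (simp add: e'_def)
  obtain V where V: "open V" "0 \<in> V" "\<And>z v. v \<in> V \<Longrightarrow> dist (h (z + v)) (h z) < e'"
    using unif_cont[OF cpt hc e'] by blast
  define U where "U = (\<lambda>x'. x - x') -` V"
  have "open U" unfolding U_def using V(1) by (intro open_vimage) (auto intro!: continuous_intros)
  moreover have "x \<in> U" using V(2) by (simp add: U_def)
  moreover have "dist (psi x') (psi x) < e" if "x' \<in> U" for x'
  proof -
    define d where "d t = h (t - x') - h (t - x)" for t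
    have dc: "continuous_on UNIV d" unfolding d_def by (intro continuous_intros trh_cont)
    have db: "cmod (d t) \<le> e'" for t
    proof -
      have "dist (h ((t - x) + (x - x'))) (h (t - x)) < e'" using that by (intro V(3)) (simp add: U_def)
      then show ?thesis by (simp add: d_def dist_norm algebra_simps)
    qed
    have "\<phi> d = \<phi> (\<lambda>t. h (t - x')) - \<phi> (\<lambda>t. h (t - x))"
      unfolding d_def by (rule phi_diff[OF tr_L2[OF hL] tr_L2[OF hL]])
    also have "\<dots> = (psi x' - psi x) * \<phi> h" by (simp add: phi_trh algebra_simps)
    finally have "cmod (psi x' - psi x) * cmod (\<phi> h) \<le> e'"
      using phi_bound[OF dc db] by (simp add: norm_mult)
    then have "cmod (psi x' - psi x) \<le> e' / cmod (\<phi> h)" using hn by (simp add: field_simps)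
    also have "\<dots> < e" using e hn by (simp add: e'_def)
    finally show ?thesis by (simp add: dist_norm)
  qed
  ultimately show "\<exists>U. open U \<and> x \<in> U \<and> (\<forall>y\<in>U. dist (psi y) (psi x) < e)" by blast
qed

end

context haar_setting
begin

lemma step_approx:
  fixes f g :: "'a \<Rightarrow> complex" and w :: "nat \<Rightarrow> complex"
  assumes fi: "integrable \<mu> f" and gm: "g \<in> borel_measurable \<mu>" and gb: "\<And>z. cmod (g z) \<le> Bg"
    and Bs: "\<And>j. B j \<in> sets borel" and dj: "disjoint_family B" and cov: "\<And>x. \<exists>j<N. x \<in> B j"
    and cl: "\<And>j z. j < N \<Longrightarrow> z \<in> B j \<Longrightarrow> cmod (g z - w j) \<le> e"
  shows "cmod ((\<integral>z. f z * g z \<partial>\<mu>) - (\<Sum>j<N. (\<integral>z. indicator (B j) z *\<^sub>R f z \<partial>\<mu>) * w j))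
     \<le> (\<integral>z. cmod (f z) \<partial>\<mu>) * e"
proof -
  have ci: "integrable \<mu> (\<lambda>z. indicator (B j) z *\<^sub>R f z)" for j
    by (rule integrable_mult_indicator) (use Bs fi in auto)
  have cwi: "integrable \<mu> (\<lambda>z. (indicator (B j) z *\<^sub>R f z) * w j)" for j
    using ci by (rule Bochner_Integration.integrable_mult_left)
  have si: "integrable \<mu> (\<lambda>z. \<Sum>j<N. (indicator (B j) z *\<^sub>R f z) * w j)"
    using cwi by (rule Bochner_Integration.integrable_sum)
  have fg: "integrable \<mu> (\<lambda>z. f z * g z)" by (rule int_mult_bounded[OF fi gm gb])
  have "(\<Sum>j<N. (\<integral>z. indicator (B j) z *\<^sub>R f z \<partial>\<mu>) * w j)
      = (\<Sum>j<N. (\<integral>z. (indicator (B j) z *\<^sub>R f z) * w j \<partial>\<mu>))"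
    by (intro sum.cong refl) (simp only: Bochner_Integration.integral_mult_left[OF ci])
  also have "\<dots> = (\<integral>z. (\<Sum>j<N. (indicator (B j) z *\<^sub>R f z) * w j) \<partial>\<mu>)"
    by (rule Bochner_Integration.integral_sum[symmetric]) (rule cwi)
  finally have eq: "(\<integral>z. f z * g z \<partial>\<mu>) - (\<Sum>j<N. (\<integral>z. indicator (B j) z *\<^sub>R f z \<partial>\<mu>) * w j)
      = (\<integral>z. f z * g z - (\<Sum>j<N. (indicator (B j) z *\<^sub>R f z) * w j) \<partial>\<mu>)"
    using fg si by simp
  have pw: "cmod (f z * g z - (\<Sum>j<N. (indicator (B j) z *\<^sub>R f z) * w j)) \<le> cmod (f z) * e" for z
  proof -
    obtain j where j: "j < N" "z \<in> B j" using cov by blast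
    have "(\<Sum>j<N. (indicator (B j) z *\<^sub>R f z) * w j) = (\<Sum>i<N. indicator (B i) z *\<^sub>R (f z * w i))"
      by simp
    also have "\<dots> = f z * w j" by (rule sum_indicator_pick[OF dj j(2,1)])
    finally have "f z * g z - (\<Sum>j<N. (indicator (B j) z *\<^sub>R f z) * w j) = f z * (g z - w j)"
      by (simp add: right_diff_distrib)
    then show ?thesis using cl[OF j] by (simp add: norm_mult mult_left_mono)
  qed
  have "cmod (\<integral>z. f z * g z - (\<Sum>j<N. (indicator (B j) z *\<^sub>R f z) * w j) \<partial>\<mu>)
      \<le> (\<integral>z. cmod (f z * g z - (\<Sum>j<N. (indicator (B j) z *\<^sub>R f z) * w j)) \<partial>\<mu>)"
    by (rule Bochner_Integration.integral_norm_bound)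
  also have "\<dots> \<le> (\<integral>z. cmod (f z) * e \<partial>\<mu>)"
    by (rule Bochner_Integration.integral_mono) (use fg si fi pw in auto)
  also have "\<dots> = (\<integral>z. cmod (f z) \<partial>\<mu>) * e" by simp
  finally show ?thesis using eq by simp
qed

end

context char_h
begin

lemma psi_meas: "psi \<in> borel_measurable \<mu>" by (rule cont_meas[OF psi_cont])

lemma phi_eq:
  assumes f: "f \<in> L2 \<mu>"
  shows "\<phi> f = (\<integral>y. f y * psi y \<partial>\<mu>)"
proof -
  have fi: "integrable \<mu> f" by (rule L2_integrable[OF f])
  define I where "I = (\<integral>y. cmod (f y) \<partial>\<mu>)"
  have I0: "I \<ge> 0" unfolding I_def by simp
  define Lam where "Lam = (\<integral>y. f y * psi y \<partial>\<mu>)"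
  obtain Bh where Bh: "\<And>z. cmod (h z) \<le> Bh" using cont_bounded[OF cpt hc] by blast
  obtain Bp where Bp: "\<And>z. cmod (psi z) \<le> Bp" using cont_bounded[OF cpt psi_cont] by blast
  have est: "cmod (\<phi> h) * cmod (\<phi> f - Lam) \<le> e * (I * (1 + cmod (\<phi> h)))" if e: "e > 0" for e
  proof -
    obtain V1 where V1: "open V1" "0 \<in> V1" "\<And>z v. v \<in> V1 \<Longrightarrow> dist (h (z + v)) (h z) < e"
      using unif_cont[OF cpt hc e] by blast
    obtain V2 where V2: "open V2" "0 \<in> V2" "\<And>z v. v \<in> V2 \<Longrightarrow> dist (psi (z + v)) (psi z) < e"
      using unif_cont[OF cpt psi_cont e] by blast
    have "open (V1 \<inter> V2)" "0 \<in> V1 \<inter> V2" using V1 V2 by auto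
    from partition_lemma[OF cpt this]
    obtain N and y :: "nat \<Rightarrow> 'a" and B where
      Bs: "\<And>j. B j \<in> sets borel" and dj: "disjoint_family B" and cov: "\<And>x. \<exists>j<N. x \<in> B j"
      and near: "\<And>j b. b \<in> B j \<Longrightarrow> b - y j \<in> V1 \<inter> V2"
      by blast
    define c where "c j = (\<integral>z. indicator (B j) z *\<^sub>R f z \<partial>\<mu>)" for j
    define S where "S = (\<Sum>j<N. c j * psi (y j))"
    define R where "R s = (\<Sum>j<N. c j * h (s - y j))" for s
    have b1: "cmod (conv \<mu> f h s - R s) \<le> I * e" for s
    proof -
      have gm: "(\<lambda>z. h (s - z)) \<in> borel_measurable \<mu>"
        by (rule cont_meas, rule continuous_on_compose2[OF hc]) (auto intro!: continuous_intros)
      have "cmod ((\<integral>z. f z * h (s - z) \<partial>\<mu>) - (\<Sum>j<N. (\<integral>z. indicator (B j) z *\<^sub>R f z \<partial>\<mu>) * h (s - y j)))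
          \<le> (\<integral>z. cmod (f z) \<partial>\<mu>) * e"
      proof (rule step_approx[OF fi gm Bh Bs dj cov])
        fix j z assume "j < N" "z \<in> B j"
        then have v: "z - y j \<in> V1" using near by blast
        have "dist (h ((s - z) + (z - y j))) (h (s - z)) < e" by (rule V1(3)[OF v])
        then show "cmod (h (s - z) - h (s - y j)) \<le> e" by (simp add: dist_norm norm_minus_commute)
      qed
      then show ?thesis by (simp add: conv_def R_def c_def I_def)
    qed
    have Rc: "continuous_on UNIV R" unfolding R_def by (intro continuous_intros trh_cont)
    have cc: "continuous_on UNIV (conv \<mu> f h)" by (rule conv_cont[OF fi hc])
    have Dc: "continuous_on UNIV (\<lambda>s. conv \<mu> f h s - R s)" by (intro continuous_intros cc Rc)
    have RL: "\<phi> R = S * \<phi> h"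
    proof -
      have "\<phi> R = (\<Sum>j<N. \<phi> (\<lambda>s. c j * h (s - y j)))"
        unfolding R_def by (rule phi_sum) (auto intro!: L2_cmult tr_L2 hL)
      also have "\<dots> = (\<Sum>j<N. c j * (psi (y j) * \<phi> h))"
        by (intro sum.cong refl) (simp add: phi_cmult[OF tr_L2[OF hL]] phi_trh)
      also have "\<dots> = S * \<phi> h" by (simp add: S_def sum_distrib_right mult.assoc)
      finally show ?thesis .
    qed
    have "\<phi> (\<lambda>s. conv \<mu> f h s - R s) = \<phi> (conv \<mu> f h) - \<phi> R"
      by (rule phi_diff[OF cont_L2[OF cc] cont_L2[OF Rc]])
    also have "\<dots> = \<phi> f * \<phi> h - S * \<phi> h" by (simp add: phi_mult[OF f hL] RL)
    finally have pD: "\<phi> (\<lambda>s. conv \<mu> f h s - R s) = (\<phi> f - S) * \<phi> h" by (simp add: algebra_simps)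
    have bnd1: "cmod ((\<phi> f - S) * \<phi> h) \<le> I * e"
      using phi_bound[OF Dc b1] pD by simp
    have bnd2: "cmod (Lam - S) \<le> I * e"
    proof -
      have "cmod ((\<integral>z. f z * psi z \<partial>\<mu>) - (\<Sum>j<N. (\<integral>z. indicator (B j) z *\<^sub>R f z \<partial>\<mu>) * psi (y j)))
          \<le> (\<integral>z. cmod (f z) \<partial>\<mu>) * e"
      proof (rule step_approx[OF fi psi_meas Bp Bs dj cov])
        fix j z assume "j < N" "z \<in> B j"
        then have v: "z - y j \<in> V2" using near by blast
        have "dist (psi (y j + (z - y j))) (psi (y j)) < e" by (rule V2(3)[OF v])
        then show "cmod (psi z - psi (y j)) \<le> e" by (simp add: dist_norm)
      qed
      then show ?thesis by (simp add: Lam_def S_def c_def I_def)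
    qed
    have "cmod (\<phi> h) * cmod (\<phi> f - Lam) = cmod ((\<phi> f - S) * \<phi> h + (S - Lam) * \<phi> h)"
      by (simp add: norm_mult[symmetric] algebra_simps)
    also have "\<dots> \<le> cmod ((\<phi> f - S) * \<phi> h) + cmod ((S - Lam) * \<phi> h)" by (rule norm_triangle_ineq)
    also have "\<dots> \<le> I * e + I * e * cmod (\<phi> h)"
    proof -
      have "cmod ((S - Lam) * \<phi> h) = cmod (Lam - S) * cmod (\<phi> h)"
        by (simp add: norm_mult norm_minus_commute)
      also have "\<dots> \<le> I * e * cmod (\<phi> h)" by (rule mult_right_mono[OF bnd2 norm_ge_zero])
      finally show ?thesis using bnd1 by simp
    qed
    also have "\<dots> = e * (I * (1 + cmod (\<phi> h)))" by (simp add: algebra_simps)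
    finally show ?thesis .
  qed
  have "cmod (\<phi> h) * cmod (\<phi> f - Lam) \<le> 0"
    by (rule small_le_zero[OF _ est]) (use I0 in simp)
  then have "cmod (\<phi> f - Lam) = 0" using hn
    by (metis mult_le_0_iff norm_ge_zero norm_le_zero_iff order_antisym zero_less_norm_iff)
  then show ?thesis by (simp add: Lam_def)
qed

definition u :: "'a \<Rightarrow> complex" where "u x = psi (- x)"

lemma u_cont: "continuous_on UNIV u"
  unfolding u_def by (rule continuous_on_compose2[OF psi_cont]) (auto intro!: continuous_intros)

lemma uL: "u \<in> L2 \<mu>" by (rule cont_L2[OF u_cont])

lemma conv_u: assumes f: "f \<in> L2 \<mu>" shows "conv \<mu> f u = (\<lambda>x. \<phi> f * u x)"
proof (rule ext)
  fix x
  have fi: "integrable \<mu> f" by (rule L2_integrable[OF f])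
  obtain Bp where Bp: "\<And>z. cmod (psi z) \<le> Bp" using cont_bounded[OF cpt psi_cont] by blast
  have "conv \<mu> f u x = (\<integral>y. f y * psi y * psi (- x) \<partial>\<mu>)"
  proof -
    have "psi (- (x - y)) = psi y * psi (- x)" for y
      using psi_add[of y "- x"] by (simp add: algebra_simps)
    then show ?thesis unfolding conv_def u_def by (simp add: mult.assoc)
  qed
  also have "\<dots> = (\<integral>y. f y * psi y \<partial>\<mu>) * psi (- x)"
    by (rule Bochner_Integration.integral_mult_left) (rule int_mult_bounded[OF fi psi_meas Bp])
  also have "\<dots> = \<phi> f * u x" by (simp add: phi_eq[OF f] u_def)
  finally show "conv \<mu> f u x = \<phi> f * u x" .
qed

lemma phi_u: "\<phi> u = 1"
proof -
  have "\<phi> u = (\<integral>y. u y * psi y \<partial>\<mu>)" by (rule phi_eq[OF uL])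
  also have "\<dots> = (\<integral>y. 1 \<partial>\<mu>)"
  proof -
    have "u y * psi y = 1" for y using psi_add[of "- y" y] psi0 by (simp add: u_def)
    then show ?thesis by simp
  qed
  also have "\<dots> = 1" by (simp add: measure_UNIV)
  finally show ?thesis .
qed

end

context haar_setting
begin

lemma meas_emeas: "emeasure \<mu> A = ennreal (measure \<mu> A)"
  by (rule finite_measure.emeasure_eq_measure[OF finite_mu])

lemma ind_neg_meas: "A \<in> sets borel \<Longrightarrow> (\<lambda>c. indicator A (- c) :: real) \<in> borel_measurable \<mu>"
proof -
  assume A: "A \<in> sets borel"
  have "indicator A \<in> borel_measurable \<mu>" using A by simp
  from measurable_compose[OF neg_meas this] show ?thesis by simp
qed

lemma compact_le_neg:
  assumes K: "compact K" and U: "open U" and KU: "K \<subseteq> U"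
  shows "measure \<mu> K \<le> measure \<mu> (uminus -` U)"
proof -
  obtain V where V: "open V" "0 \<in> V" "\<And>z v. z \<in> K \<Longrightarrow> v \<in> V \<Longrightarrow> z + v \<in> U"
    using compact_nbhd[OF K U KU] by blast
  from partition_lemma[OF cpt V(1,2)]
  obtain N and y :: "nat \<Rightarrow> 'a" and B where
    Bs: "\<And>j. B j \<in> sets borel" and dj: "disjoint_family B" and cov: "\<And>x. \<exists>j<N. x \<in> B j"
    and near: "\<And>j b. b \<in> B j \<Longrightarrow> b - y j \<in> V"
    by blast
  have Kb: "K \<in> sets borel" using compact_imp_closed[OF K] by simp
  have Ub: "U \<in> sets borel" using U by simp
  define n where "n A = (\<integral>c. indicator A (- c) \<partial>\<mu> :: real)" for A
  have ni: "integrable \<mu> (\<lambda>c. indicator A (- c) :: real)" if "A \<in> sets borel" for A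
    by (rule bounded_integrable[OF ind_neg_meas[OF that], of 1]) (simp add: indicator_def)
  have nU: "n U = measure \<mu> (uminus -` U)"
  proof -
    have "n U = (\<integral>c. indicator (uminus -` U) c \<partial>\<mu>)" by (simp add: n_def indicator_vimage)
    also have "\<dots> = measure \<mu> (uminus -` U)" by simp
    finally show ?thesis .
  qed
  have mK: "(\<integral>x. indicator K (x + y j) \<partial>\<mu> :: real) = measure \<mu> K" for j
  proof -
    have "(\<integral>x. indicator K (x + y j) \<partial>\<mu> :: real) = (\<integral>x. indicator K x \<partial>\<mu>)"
      by (rule integral_trans)
    also have "\<dots> = measure \<mu> K" by simp
    finally show ?thesis .
  qed
  have Ki: "integrable \<mu> (\<lambda>x. indicator K (x + y j) :: real)" for j
  proof -
    have "(\<lambda>x. indicator K (x + y j) :: real) \<in> borel_measurable \<mu>"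
      using meas_trans[of "indicator K"] Kb by simp
    then show ?thesis by (rule bounded_integrable[of _ 1]) (simp add: indicator_def)
  qed
  have sum_n: "(\<Sum>j<N. n (B j)) = 1"
  proof -
    have "(\<Sum>j<N. n (B j)) = (\<integral>c. (\<Sum>j<N. indicator (B j) (- c)) \<partial>\<mu> :: real)"
      unfolding n_def by (rule Bochner_Integration.integral_sum[symmetric]) (rule ni[OF Bs])
    also have "\<dots> = (\<integral>c. 1 \<partial>\<mu> :: real)"
    proof -
      have "(\<Sum>j<N. indicator (B j) (- c)) = (1::real)" for c
      proof -
        obtain j where j: "j < N" "- c \<in> B j" using cov by blast
        have "(\<Sum>i<N. indicator (B i) (- c) *\<^sub>R (1::real)) = 1"
          by (rule sum_indicator_pick[OF dj j(2,1)])
        then show ?thesis by simp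
      qed
      then show ?thesis by simp
    qed
    also have "\<dots> = 1" by (simp add: measure_UNIV)
    finally show ?thesis .
  qed
  have pw: "(\<Sum>j<N. n (B j) * indicator K (x + y j)) \<le> n U" for x
  proof -
    have "(\<Sum>j<N. n (B j) * indicator K (x + y j))
        = (\<integral>c. (\<Sum>j<N. indicator (B j) (- c) * indicator K (x + y j)) \<partial>\<mu> :: real)"
    proof -
      have "(\<Sum>j<N. n (B j) * indicator K (x + y j))
          = (\<Sum>j<N. (\<integral>c. indicator (B j) (- c) * indicator K (x + y j) \<partial>\<mu> :: real))"
        unfolding n_def by (intro sum.cong refl) (simp only: Bochner_Integration.integral_mult_left[OF ni[OF Bs]])
      also have "\<dots> = (\<integral>c. (\<Sum>j<N. indicator (B j) (- c) * indicator K (x + y j)) \<partial>\<mu> :: real)"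
        by (rule Bochner_Integration.integral_sum[symmetric])
           (rule Bochner_Integration.integrable_mult_left, rule ni[OF Bs])
      finally show ?thesis .
    qed
    also have "\<dots> \<le> (\<integral>c. indicator U (x + - c) \<partial>\<mu> :: real)"
    proof (rule Bochner_Integration.integral_mono)
      show "integrable \<mu> (\<lambda>c. \<Sum>j<N. indicator (B j) (- c) * indicator K (x + y j) :: real)"
        by (rule Bochner_Integration.integrable_sum)
           (rule Bochner_Integration.integrable_mult_left, rule ni[OF Bs])
      have "(\<lambda>c. indicator U (x + - c) :: real) \<in> borel_measurable \<mu>"
      proof -
        have "(\<lambda>c. indicator U (- c) :: real) \<in> borel_measurable \<mu>" by (rule ind_neg_meas[OF Ub])
        from meas_trans[OF this, of "- x"] show ?thesis by (simp add: algebra_simps)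
      qed
      then show "integrable \<mu> (\<lambda>c. indicator U (x + - c) :: real)"
        by (rule bounded_integrable[of _ 1]) (simp add: indicator_def)
      fix c
      obtain j where j: "j < N" "- c \<in> B j" using cov by blast
      have "(\<Sum>i<N. indicator (B i) (- c) *\<^sub>R (indicator K (x + y i) :: real)) = indicator K (x + y j)"
        by (rule sum_indicator_pick[OF dj j(2,1)])
      then have eq: "(\<Sum>i<N. indicator (B i) (- c) * (indicator K (x + y i) :: real)) = indicator K (x + y j)"
        by simp
      show "(\<Sum>j<N. indicator (B j) (- c) * indicator K (x + y j)) \<le> (indicator U (x + - c) :: real)"
      proof (cases "x + y j \<in> K")
        case True
        have "(x + y j) + (- c - y j) \<in> U" by (rule V(3)[OF True near[OF j(2)]])
        then have "x + - c \<in> U" by (simp add: algebra_simps)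
        then show ?thesis using eq True by simp
      next
        case False
        then show ?thesis using eq by (simp add: indicator_def)
      qed
    qed
    also have "\<dots> = n U"
    proof -
      have "(\<integral>c. indicator U (- (c + - x)) \<partial>\<mu> :: real) = (\<integral>c. indicator U (- c) \<partial>\<mu>)"
        by (rule integral_trans)
      then show ?thesis by (simp add: n_def algebra_simps)
    qed
    finally show ?thesis .
  qed
  have "(\<integral>x. (\<Sum>j<N. n (B j) * indicator K (x + y j)) \<partial>\<mu>) \<le> (\<integral>x. n U \<partial>\<mu>)"
  proof (rule Bochner_Integration.integral_mono)
    show "integrable \<mu> (\<lambda>x. (\<Sum>j<N. n (B j) * indicator K (x + y j)))"
      by (rule Bochner_Integration.integrable_sum) (rule Bochner_Integration.integrable_mult_right, rule Ki)
    show "integrable \<mu> (\<lambda>x. n U)" by (rule integrable_const_mu)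
    fix x show "(\<Sum>j<N. n (B j) * indicator K (x + y j)) \<le> n U" by (rule pw)
  qed
  moreover have "(\<integral>x. (\<Sum>j<N. n (B j) * indicator K (x + y j)) \<partial>\<mu>) = measure \<mu> K"
  proof -
    have "(\<integral>x. (\<Sum>j<N. n (B j) * indicator K (x + y j)) \<partial>\<mu>)
        = (\<Sum>j<N. (\<integral>x. n (B j) * indicator K (x + y j) \<partial>\<mu>))"
      by (rule Bochner_Integration.integral_sum) (rule Bochner_Integration.integrable_mult_right, rule Ki)
    also have "\<dots> = (\<Sum>j<N. n (B j) * measure \<mu> K)"
      by (intro sum.cong refl) (simp only: Bochner_Integration.integral_mult_right[OF Ki] mK)
    also have "\<dots> = measure \<mu> K" using sum_n by (simp add: sum_distrib_right[symmetric])
    finally show ?thesis .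
  qed
  ultimately show ?thesis using nU by (simp add: measure_UNIV)
qed

lemma open_le_neg:
  assumes U: "open U" shows "measure \<mu> U \<le> measure \<mu> (uminus -` U)"
proof -
  have "emeasure \<mu> U = (SUP K\<in>{K. compact K \<and> K \<subseteq> U}. emeasure \<mu> K)" by (rule inner_reg[OF U])
  also have "\<dots> \<le> ennreal (measure \<mu> (uminus -` U))"
  proof (rule SUP_least)
    fix K assume "K \<in> {K. compact K \<and> K \<subseteq> U}"
    then have "measure \<mu> K \<le> measure \<mu> (uminus -` U)" using compact_le_neg U by blast
    then show "emeasure \<mu> K \<le> ennreal (measure \<mu> (uminus -` U))" by (simp add: meas_emeas)
  qed
  finally show ?thesis by (simp add: meas_emeas)
qed

lemma open_neg: "open U \<Longrightarrow> open (uminus -` (U :: 'a set))"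
  by (intro open_vimage) (auto intro!: continuous_intros)

lemma open_eq_neg:
  assumes U: "open U" shows "measure \<mu> (uminus -` U) = measure \<mu> U"
proof -
  have "measure \<mu> (uminus -` U) \<le> measure \<mu> (uminus -` uminus -` U)"
    by (rule open_le_neg[OF open_neg[OF U]])
  moreover have "uminus -` uminus -` U = U" by auto
  ultimately show ?thesis using open_le_neg[OF U] by simp
qed

lemma borel_le_neg:
  assumes A: "A \<in> sets borel" shows "measure \<mu> (uminus -` A) \<le> measure \<mu> A"
proof -
  have "ennreal (measure \<mu> (uminus -` A)) \<le> (INF U\<in>{U. open U \<and> A \<subseteq> U}. emeasure \<mu> U)"
  proof (rule INF_greatest)
    fix U assume "U \<in> {U. open U \<and> A \<subseteq> U}"
    then have U: "open U" "A \<subseteq> U" by auto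
    have Ub: "uminus -` U \<in> sets \<mu>" using open_neg[OF U(1)] by simp
    have "measure \<mu> (uminus -` A) \<le> measure \<mu> (uminus -` U)"
      using U(2) Ub by (intro finite_measure.finite_measure_mono[OF finite_mu]) auto
    also have "\<dots> = measure \<mu> U" by (rule open_eq_neg[OF U(1)])
    finally show "ennreal (measure \<mu> (uminus -` A)) \<le> emeasure \<mu> U" by (simp add: meas_emeas)
  qed
  also have "\<dots> = emeasure \<mu> A" by (rule outer_reg[OF A, symmetric])
  finally show ?thesis by (simp add: meas_emeas)
qed

lemma borel_eq_neg:
  assumes A: "A \<in> sets borel" shows "measure \<mu> (uminus -` A) = measure \<mu> A"
proof -
  have A': "uminus -` A \<in> sets borel"
  proof -
    have "(uminus :: 'a \<Rightarrow> 'a) \<in> borel_measurable borel"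
      by (intro borel_measurable_continuous_onI continuous_intros)
    then show ?thesis using A by (simp add: measurable_sets_borel)
  qed
  have "measure \<mu> (uminus -` uminus -` A) \<le> measure \<mu> (uminus -` A)" by (rule borel_le_neg[OF A'])
  moreover have "uminus -` uminus -` A = A" by auto
  ultimately show ?thesis using borel_le_neg[OF A] by simp
qed

lemma distr_neg: "distr \<mu> \<mu> uminus = \<mu>"
proof (rule measure_eqI)
  fix A assume A: "A \<in> sets (distr \<mu> \<mu> uminus)"
  then have Ab: "A \<in> sets borel" by simp
  have "emeasure (distr \<mu> \<mu> uminus) A = emeasure \<mu> (uminus -` A \<inter> space \<mu>)"
    using emeasure_distr[OF neg_meas, of A] Ab by simp
  also have "\<dots> = ennreal (measure \<mu> (uminus -` A))" by (simp add: meas_emeas)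
  also have "\<dots> = emeasure \<mu> A" using borel_eq_neg[OF Ab] by (simp add: meas_emeas)
  finally show "emeasure (distr \<mu> \<mu> uminus) A = emeasure \<mu> A" .
qed simp

lemma integral_neg: "(\<integral>y. f (- y) \<partial>\<mu>) = (\<integral>y. f y \<partial>\<mu>)"
  for f :: "'a \<Rightarrow> 'b::{banach,second_countable_topology}"
proof (cases "f \<in> borel_measurable \<mu>")
  case True
  have "integral\<^sup>L (distr \<mu> \<mu> uminus) f = (\<integral>y. f (- y) \<partial>\<mu>)"
    by (rule integral_distr[OF neg_meas True])
  then show ?thesis by (simp only: distr_neg)
next
  case False
  have "\<not> integrable \<mu> f" using False borel_measurable_integrable by blast
  moreover have "\<not> integrable \<mu> (\<lambda>y. f (- y))"
  proof
    assume "integrable \<mu> (\<lambda>y. f (- y))"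
    then have "(\<lambda>y. f (- y)) \<in> borel_measurable \<mu>" by (rule borel_measurable_integrable)
    from measurable_compose[OF neg_meas this]
    have "(\<lambda>y. f (- (- y))) \<in> borel_measurable \<mu>" .
    then show False using False by simp
  qed
  ultimately show ?thesis by (simp add: not_integrable_integral_eq)
qed

lemma integrable_neg_iff:
  fixes f :: "'a \<Rightarrow> 'b::{banach,second_countable_topology}"
  shows "integrable \<mu> (\<lambda>y. f (- y)) \<longleftrightarrow> integrable \<mu> f"
proof
  assume "integrable \<mu> f"
  then have "integrable (distr \<mu> \<mu> uminus) f" by (simp only: distr_neg)
  then show "integrable \<mu> (\<lambda>y. f (- y))" by (rule integrable_distr[OF neg_meas])
next
  assume "integrable \<mu> (\<lambda>y. f (- y))"
  then have "integrable (distr \<mu> \<mu> uminus) (\<lambda>y. f (- y))" by (simp only: distr_neg)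
  then have "integrable \<mu> (\<lambda>y. f (- (- y)))" by (rule integrable_distr[OF neg_meas])
  then show "integrable \<mu> f" by simp
qed

lemma integral_refl: "(\<integral>y. f (x - y) \<partial>\<mu>) = (\<integral>y. f y \<partial>\<mu>)"
  for f :: "'a \<Rightarrow> 'b::{banach,second_countable_topology}"
proof -
  have "(\<integral>y. f (x - y) \<partial>\<mu>) = (\<integral>y. (\<lambda>z. f (z + x)) (- y) \<partial>\<mu>)" by (simp add: algebra_simps)
  also have "\<dots> = (\<integral>y. f (y + x) \<partial>\<mu>)" by (rule integral_neg)
  also have "\<dots> = (\<integral>y. f y \<partial>\<mu>)" by (rule integral_trans)
  finally show ?thesis .
qed

lemma integrable_refl_iff:
  fixes f :: "'a \<Rightarrow> 'b::{banach,second_countable_topology}"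
  shows "integrable \<mu> (\<lambda>y. f (x - y)) \<longleftrightarrow> integrable \<mu> f"
proof -
  have "integrable \<mu> (\<lambda>y. f (x - y)) \<longleftrightarrow> integrable \<mu> (\<lambda>y. (\<lambda>z. f (z + x)) (- y))"
    by (simp add: algebra_simps)
  also have "\<dots> \<longleftrightarrow> integrable \<mu> (\<lambda>z. f (z + x))" by (rule integrable_neg_iff)
  also have "\<dots> \<longleftrightarrow> integrable \<mu> f" by (rule integrable_trans_iff)
  finally show ?thesis .
qed

lemma L2_refl: assumes "f \<in> L2 \<mu>" shows "(\<lambda>y. f (x - y)) \<in> L2 \<mu>"
proof -
  have "integrable \<mu> (\<lambda>y. (cmod (f (x - y)))\<^sup>2)"
    using L2_sq[OF assms] integrable_refl_iff[of "\<lambda>y. (cmod (f y))\<^sup>2" x] by simp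
  moreover have "(\<lambda>y. f (x - y)) \<in> borel_measurable \<mu>"
  proof -
    have "(\<lambda>y. f (- y)) \<in> borel_measurable \<mu>" using measurable_compose[OF neg_meas L2_meas[OF assms]] .
    from meas_trans[OF this, of "- x"] show ?thesis by (simp add: algebra_simps)
  qed
  ultimately show ?thesis unfolding L2_def by simp
qed

end

context haar_setting
begin

definition TC1 :: "('a \<Rightarrow> 'b::{banach,second_countable_topology}) \<Rightarrow> bool" where
  "TC1 f \<longleftrightarrow> (\<forall>e>0. \<exists>V. open V \<and> 0 \<in> V \<and> (\<forall>t\<in>V. (\<integral>y. norm (f (y + t) - f y) \<partial>\<mu>) \<le> e))"

lemma ind_int: "A \<in> sets borel \<Longrightarrow> integrable \<mu> (\<lambda>y. indicator A (y + t) :: real)"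
proof -
  assume A: "A \<in> sets borel"
  have "(\<lambda>y. indicator A (y + t) :: real) \<in> borel_measurable \<mu>"
    using meas_trans[of "indicator A"] A by simp
  then show ?thesis by (rule bounded_integrable[of _ 1]) (simp add: indicator_def)
qed

lemma ind_int0: "A \<in> sets borel \<Longrightarrow> integrable \<mu> (\<lambda>y. indicator A y :: real)"
  using ind_int[of A 0] by simp

lemma TC_ind_open:
  assumes U: "open U" shows "TC1 (indicator U :: 'a \<Rightarrow> real)"
  unfolding TC1_def
proof (intro allI impI)
  fix e :: real assume e: "e > 0"
  have Ub: "U \<in> sets borel" using U by simp
  obtain K where K: "compact K" "K \<subseteq> U" "measure \<mu> U - measure \<mu> K \<le> e / 2"
  proof (cases "measure \<mu> U \<le> e / 2")
    case True
    then show ?thesis using that[of "{}"] by simp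
  next
    case False
    have "ennreal (measure \<mu> U - e / 2) < ennreal (measure \<mu> U)"
      using False e by (simp add: ennreal_lessI)
    also have "\<dots> = (SUP K\<in>{K. compact K \<and> K \<subseteq> U}. emeasure \<mu> K)"
      using inner_reg[OF U] by (simp add: meas_emeas)
    finally obtain K where "compact K" "K \<subseteq> U" "ennreal (measure \<mu> U - e / 2) < emeasure \<mu> K"
      by (auto simp: less_SUP_iff)
    then have "measure \<mu> U - e / 2 < measure \<mu> K"
      using ennreal_less_iff[of "measure \<mu> U - e / 2" "measure \<mu> K"] False by (simp add: meas_emeas)
    then show ?thesis using that \<open>compact K\<close> \<open>K \<subseteq> U\<close> by simp
  qed
  have Kb: "K \<in> sets borel" using compact_imp_closed[OF K(1)] by simp
  obtain V where V: "open V" "0 \<in> V" "\<And>z v. z \<in> K \<Longrightarrow> v \<in> V \<Longrightarrow> z + v \<in> U"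
    using compact_nbhd[OF K(1) U K(2)] by blast
  have "(\<integral>y. norm (indicator U (y + t) - indicator U y :: real) \<partial>\<mu>) \<le> e" if t: "t \<in> V" for t
  proof -
    have "(\<integral>y. norm (indicator U (y + t) - indicator U y :: real) \<partial>\<mu>)
        \<le> (\<integral>y. (indicator U (y + t) - indicator K y) + (indicator U y - indicator K y) \<partial>\<mu>)"
    proof (rule Bochner_Integration.integral_mono)
      show "integrable \<mu> (\<lambda>y. norm (indicator U (y + t) - indicator U y :: real))"
        using ind_int[OF Ub] ind_int0[OF Ub] by auto
      show "integrable \<mu> (\<lambda>y. (indicator U (y + t) - indicator K y) + (indicator U y - indicator K y) :: real)"
        using ind_int[OF Ub] ind_int0[OF Ub] ind_int0[OF Kb] by auto
      fix y
      show "norm (indicator U (y + t) - indicator U y :: real)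
          \<le> (indicator U (y + t) - indicator K y) + (indicator U y - indicator K y)"
      proof (cases "y \<in> K")
        case True
        then have "y + t \<in> U" "y \<in> U" using V(3)[OF True t] K(2) by auto
        then show ?thesis using True by (simp add: indicator_def)
      next
        case False
        then show ?thesis by (simp add: indicator_def)
      qed
    qed
    also have "\<dots> = 2 * (measure \<mu> U - measure \<mu> K)"
    proof -
      have "(\<integral>y. indicator U (y + t) \<partial>\<mu> :: real) = measure \<mu> U"
        using integral_trans[of "indicator U :: 'a \<Rightarrow> real" t] by simp
      then show ?thesis using ind_int[OF Ub] ind_int0[OF Ub] ind_int0[OF Kb] by simp
    qed
    also have "\<dots> \<le> e" using K(3) by simp
    finally show ?thesis .
  qed
  then show "\<exists>V. open V \<and> 0 \<in> V \<and> (\<forall>t\<in>V. (\<integral>y. norm (indicator U (y + t) - indicator U y :: real) \<partial>\<mu>) \<le> e)"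
    using V(1,2) by blast
qed

lemma TC_ind:
  assumes A: "A \<in> sets borel" shows "TC1 (indicator A :: 'a \<Rightarrow> real)"
  unfolding TC1_def
proof (intro allI impI)
  fix e :: real assume e: "e > 0"
  have "ennreal (measure \<mu> A) < ennreal (measure \<mu> A + e / 4)"
    using e by (simp add: ennreal_lessI)
  also have "ennreal (measure \<mu> A) = (INF U\<in>{U. open U \<and> A \<subseteq> U}. emeasure \<mu> U)"
    using outer_reg[OF A] by (simp add: meas_emeas)
  finally obtain U where U: "open U" "A \<subseteq> U" "emeasure \<mu> U < ennreal (measure \<mu> A + e / 4)"
    by (auto simp: INF_less_iff)
  then have mU: "measure \<mu> U - measure \<mu> A \<le> e / 4"
    using ennreal_less_iff[of "measure \<mu> U" "measure \<mu> A + e / 4"] by (simp add: meas_emeas)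
  have Ub: "U \<in> sets borel" using U by simp
  obtain V where V: "open V" "0 \<in> V" "\<And>t. t \<in> V \<Longrightarrow> (\<integral>y. norm (indicator U (y + t) - indicator U y :: real) \<partial>\<mu>) \<le> e / 2"
    using TC_ind_open[OF U(1)] e unfolding TC1_def by (metis half_gt_zero)
  have "(\<integral>y. norm (indicator A (y + t) - indicator A y :: real) \<partial>\<mu>) \<le> e" if t: "t \<in> V" for t
  proof -
    have "(\<integral>y. norm (indicator A (y + t) - indicator A y :: real) \<partial>\<mu>)
        \<le> (\<integral>y. norm (indicator U (y + t) - indicator U y :: real) + (indicator U (y + t) - indicator A (y + t))
              + (indicator U y - indicator A y) \<partial>\<mu>)"
    proof (rule Bochner_Integration.integral_mono)
      show "integrable \<mu> (\<lambda>y. norm (indicator A (y + t) - indicator A y :: real))"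
        using ind_int[OF A] ind_int0[OF A] by auto
      show "integrable \<mu> (\<lambda>y. norm (indicator U (y + t) - indicator U y :: real) + (indicator U (y + t) - indicator A (y + t))
              + (indicator U y - indicator A y))"
        using ind_int[OF Ub] ind_int0[OF Ub] ind_int[OF A] ind_int0[OF A] by auto
      fix y
      show "norm (indicator A (y + t) - indicator A y :: real)
          \<le> norm (indicator U (y + t) - indicator U y :: real) + (indicator U (y + t) - indicator A (y + t))
              + (indicator U y - indicator A y)"
        using U(2) by (auto simp: indicator_def)
    qed
    also have "\<dots> = (\<integral>y. norm (indicator U (y + t) - indicator U y :: real) \<partial>\<mu>) + 2 * (measure \<mu> U - measure \<mu> A)"
    proof -
      have "(\<integral>y. indicator U (y + t) \<partial>\<mu> :: real) = measure \<mu> U"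
        using integral_trans[of "indicator U :: 'a \<Rightarrow> real" t] by simp
      moreover have "(\<integral>y. indicator A (y + t) \<partial>\<mu> :: real) = measure \<mu> A"
        using integral_trans[of "indicator A :: 'a \<Rightarrow> real" t] by simp
      ultimately show ?thesis using ind_int[OF Ub] ind_int0[OF Ub] ind_int[OF A] ind_int0[OF A] by simp
    qed
    also have "\<dots> \<le> e" using V(3)[OF t] mU by simp
    finally show ?thesis .
  qed
  then show "\<exists>V. open V \<and> 0 \<in> V \<and> (\<forall>t\<in>V. (\<integral>y. norm (indicator A (y + t) - indicator A y :: real) \<partial>\<mu>) \<le> e)"
    using V(1,2) by blast
qed

end

context haar_setting
begin

lemma TC_scaled:
  assumes A: "A \<in> sets borel" shows "TC1 (\<lambda>x. indicator A x *\<^sub>R (c::complex))"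
  unfolding TC1_def
proof (intro allI impI)
  fix e :: real assume e: "e > 0"
  have e': "e / (cmod c + 1) > 0" by (intro divide_pos_pos e) (smt (verit) norm_ge_zero)
  obtain V where V: "open V" "0 \<in> V" "\<And>t. t \<in> V \<Longrightarrow> (\<integral>y. norm (indicator A (y + t) - indicator A y :: real) \<partial>\<mu>) \<le> e / (cmod c + 1)"
    using TC_ind[OF A] e' unfolding TC1_def by metis
  have "(\<integral>y. norm (indicator A (y + t) *\<^sub>R c - indicator A y *\<^sub>R c) \<partial>\<mu>) \<le> e" if t: "t \<in> V" for t
  proof -
    have "(\<integral>y. norm (indicator A (y + t) *\<^sub>R c - indicator A y *\<^sub>R c) \<partial>\<mu>)
        = (\<integral>y. norm (indicator A (y + t) - indicator A y :: real) * cmod c \<partial>\<mu>)"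
      by (simp add: scaleR_diff_left[symmetric] del: scaleR_diff_left)
    also have "\<dots> = (\<integral>y. norm (indicator A (y + t) - indicator A y :: real) \<partial>\<mu>) * cmod c" by simp
    also have "\<dots> \<le> e / (cmod c + 1) * cmod c" by (rule mult_right_mono[OF V(3)[OF t] norm_ge_zero])
    also have "\<dots> \<le> e"
    proof -
      have p: "0 < cmod c + 1" by (smt (verit) norm_ge_zero)
      have q: "cmod c / (cmod c + 1) \<le> 1" using p by (simp add: divide_le_eq_1)
      have "e / (cmod c + 1) * cmod c = e * (cmod c / (cmod c + 1))" by simp
      also have "\<dots> \<le> e * 1" by (rule mult_left_mono[OF q]) (use e in simp)
      finally show ?thesis by simp
    qed
    finally show ?thesis .
  qed
  then show "\<exists>V. open V \<and> 0 \<in> V \<and> (\<forall>t\<in>V. (\<integral>y. norm (indicator A (y + t) *\<^sub>R c - indicator A y *\<^sub>R c) \<partial>\<mu>) \<le> e)"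
    using V(1,2) by blast
qed

lemma int_trans:
  fixes f :: "'a \<Rightarrow> 'b::{banach,second_countable_topology}"
  shows "integrable \<mu> f \<Longrightarrow> integrable \<mu> (\<lambda>y. f (y + t))"
  using integrable_trans_iff[of f t] by blast

lemma TC_add:
  fixes f g :: "'a \<Rightarrow> complex"
  assumes fi: "integrable \<mu> f" and gi: "integrable \<mu> g" and tf: "TC1 f" and tg: "TC1 g"
  shows "TC1 (\<lambda>x. f x + g x)"
  unfolding TC1_def
proof (intro allI impI)
  fix e :: real assume e: "e > 0"
  obtain V1 where V1: "open V1" "0 \<in> V1" "\<And>t. t \<in> V1 \<Longrightarrow> (\<integral>y. norm (f (y + t) - f y) \<partial>\<mu>) \<le> e / 2"
    using tf e unfolding TC1_def by (metis half_gt_zero)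
  obtain V2 where V2: "open V2" "0 \<in> V2" "\<And>t. t \<in> V2 \<Longrightarrow> (\<integral>y. norm (g (y + t) - g y) \<partial>\<mu>) \<le> e / 2"
    using tg e unfolding TC1_def by (metis half_gt_zero)
  have "(\<integral>y. norm ((f (y + t) + g (y + t)) - (f y + g y)) \<partial>\<mu>) \<le> e" if t: "t \<in> V1 \<inter> V2" for t
  proof -
    have "(\<integral>y. norm ((f (y + t) + g (y + t)) - (f y + g y)) \<partial>\<mu>)
        \<le> (\<integral>y. norm (f (y + t) - f y) + norm (g (y + t) - g y) \<partial>\<mu>)"
    proof (rule Bochner_Integration.integral_mono)
      show "integrable \<mu> (\<lambda>y. norm ((f (y + t) + g (y + t)) - (f y + g y)))"
        using int_trans[OF fi] int_trans[OF gi] fi gi by auto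
      show "integrable \<mu> (\<lambda>y. norm (f (y + t) - f y) + norm (g (y + t) - g y))"
        using int_trans[OF fi] int_trans[OF gi] fi gi by auto
      fix y show "norm ((f (y + t) + g (y + t)) - (f y + g y)) \<le> norm (f (y + t) - f y) + norm (g (y + t) - g y)"
        by (metis add_diff_add norm_triangle_ineq)
    qed
    also have "\<dots> = (\<integral>y. norm (f (y + t) - f y) \<partial>\<mu>) + (\<integral>y. norm (g (y + t) - g y) \<partial>\<mu>)"
      using int_trans[OF fi] int_trans[OF gi] fi gi by (intro Bochner_Integration.integral_add) auto
    also have "\<dots> \<le> e" using V1(3)[of t] V2(3)[of t] t by simp
    finally show ?thesis .
  qed
  moreover have "open (V1 \<inter> V2)" "0 \<in> V1 \<inter> V2" using V1 V2 by auto
  ultimately show "\<exists>V. open V \<and> 0 \<in> V \<and> (\<forall>t\<in>V. (\<integral>y. norm ((f (y + t) + g (y + t)) - (f y + g y)) \<partial>\<mu>) \<le> e)"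
    by blast
qed

lemma TC_approx:
  fixes f :: "'a \<Rightarrow> complex"
  assumes fi: "integrable \<mu> f"
    and ap: "\<And>e. e > 0 \<Longrightarrow> \<exists>s. integrable \<mu> s \<and> TC1 s \<and> (\<integral>x. norm (f x - s x) \<partial>\<mu>) \<le> e"
  shows "TC1 f"
  unfolding TC1_def
proof (intro allI impI)
  fix e :: real assume e: "e > 0"
  obtain s where si: "integrable \<mu> s" and ts: "TC1 s" and fs: "(\<integral>x. norm (f x - s x) \<partial>\<mu>) \<le> e / 4"
    using ap[of "e / 4"] e by auto
  obtain V where V: "open V" "0 \<in> V" "\<And>t. t \<in> V \<Longrightarrow> (\<integral>y. norm (s (y + t) - s y) \<partial>\<mu>) \<le> e / 2"
    using ts e unfolding TC1_def by (metis half_gt_zero)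
  have "(\<integral>y. norm (f (y + t) - f y) \<partial>\<mu>) \<le> e" if t: "t \<in> V" for t
  proof -
    have "(\<integral>y. norm (f (y + t) - f y) \<partial>\<mu>)
        \<le> (\<integral>y. norm (f (y + t) - s (y + t)) + norm (s (y + t) - s y) + norm (f y - s y) \<partial>\<mu>)"
    proof (rule Bochner_Integration.integral_mono)
      show "integrable \<mu> (\<lambda>y. norm (f (y + t) - f y))"
        by (intro integrable_norm Bochner_Integration.integrable_diff int_trans fi)
      show "integrable \<mu> (\<lambda>y. norm (f (y + t) - s (y + t)) + norm (s (y + t) - s y) + norm (f y - s y))"
        by (intro Bochner_Integration.integrable_add integrable_norm Bochner_Integration.integrable_diff
            int_trans fi si)
      fix y
      have eq: "f (y + t) - f y = ((f (y + t) - s (y + t)) + (s (y + t) - s y)) + (s y - f y)" by simp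
      have "norm (f (y + t) - f y) \<le> norm ((f (y + t) - s (y + t)) + (s (y + t) - s y)) + norm (s y - f y)"
        by (subst eq) (rule norm_triangle_ineq)
      also have "\<dots> \<le> norm (f (y + t) - s (y + t)) + norm (s (y + t) - s y) + norm (s y - f y)"
        using norm_triangle_ineq[of "f (y + t) - s (y + t)" "s (y + t) - s y"] by simp
      finally show "norm (f (y + t) - f y) \<le> norm (f (y + t) - s (y + t)) + norm (s (y + t) - s y) + norm (f y - s y)"
        by (simp add: norm_minus_commute)
    qed
    also have "\<dots> = (\<integral>y. norm (f (y + t) - s (y + t)) \<partial>\<mu>) + (\<integral>y. norm (s (y + t) - s y) \<partial>\<mu>) + (\<integral>y. norm (f y - s y) \<partial>\<mu>)"
    proof -
      have i1: "integrable \<mu> (\<lambda>y. norm (f (y + t) - s (y + t)))"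
        by (intro integrable_norm Bochner_Integration.integrable_diff int_trans fi si)
      have i2: "integrable \<mu> (\<lambda>y. norm (s (y + t) - s y))"
        by (intro integrable_norm Bochner_Integration.integrable_diff int_trans fi si)
      have i3: "integrable \<mu> (\<lambda>y. norm (f y - s y))"
        by (intro integrable_norm Bochner_Integration.integrable_diff int_trans fi si)
      show ?thesis using i1 i2 i3 by simp
    qed
    also have "(\<integral>y. norm (f (y + t) - s (y + t)) \<partial>\<mu>) = (\<integral>y. norm (f y - s y) \<partial>\<mu>)"
      by (rule integral_trans[of "\<lambda>y. norm (f y - s y)"])
    finally show ?thesis using V(3)[OF t] fs by simp
  qed
  then show "\<exists>V. open V \<and> 0 \<in> V \<and> (\<forall>t\<in>V. (\<integral>y. norm (f (y + t) - f y) \<partial>\<mu>) \<le> e)"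
    using V(1,2) by blast
qed

lemma TC_int:
  fixes f :: "'a \<Rightarrow> complex"
  assumes "integrable \<mu> f" shows "TC1 f"
  using assms
proof (induction rule: integrable_induct)
  case (base A c)
  then show ?case using TC_scaled[of A c] by simp
next
  case (add f g)
  then show ?case by (intro TC_add)
next
  case (lim f s)
  have fi: "integrable \<mu> f" using lim by blast
  have si: "\<And>i. integrable \<mu> (s i)" using lim by blast
  have ti: "\<And>i. TC1 (s i)" using lim by blast
  have sc: "\<And>x. x \<in> space \<mu> \<Longrightarrow> (\<lambda>i. s i x) \<longlonglongrightarrow> f x" using lim by blast
  have sb: "\<And>i x. x \<in> space \<mu> \<Longrightarrow> norm (s i x) \<le> 2 * norm (f x)" using lim by blast
  show ?case
  proof (rule TC_approx[OF fi])
    fix e :: real assume e: "e > 0"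
    have "(\<lambda>i. \<integral>x. norm (f x - s i x) \<partial>\<mu>) \<longlonglongrightarrow> (\<integral>x. 0 \<partial>\<mu>)"
    proof (rule integral_dominated_convergence[where w="\<lambda>x. 3 * norm (f x)"])
      show "(\<lambda>x. 0::real) \<in> borel_measurable \<mu>" by simp
      show "(\<lambda>x. norm (f x - s i x)) \<in> borel_measurable \<mu>" for i
        using si[of i] fi by measurable
      show "integrable \<mu> (\<lambda>x. 3 * norm (f x))" using fi by simp
      show "AE x in \<mu>. (\<lambda>i. norm (f x - s i x)) \<longlonglongrightarrow> 0"
      proof (rule AE_I2)
        fix x assume "x \<in> space \<mu>"
        then have "(\<lambda>i. s i x) \<longlonglongrightarrow> f x" by (rule sc)
        then have "(\<lambda>i. f x - s i x) \<longlonglongrightarrow> f x - f x" by (intro tendsto_intros)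
        then show "(\<lambda>i. norm (f x - s i x)) \<longlonglongrightarrow> 0" using tendsto_norm_zero by force
      qed
      show "AE x in \<mu>. norm (norm (f x - s i x)) \<le> 3 * norm (f x)" for i
      proof (rule AE_I2)
        fix x assume x: "x \<in> space \<mu>"
        have "norm (f x - s i x) \<le> norm (f x) + norm (s i x)" by (rule norm_triangle_ineq4)
        then show "norm (norm (f x - s i x)) \<le> 3 * norm (f x)" using sb[OF x, of i] by simp
      qed
    qed
    then have "(\<lambda>i. \<integral>x. norm (f x - s i x) \<partial>\<mu>) \<longlonglongrightarrow> 0" by simp
    then have "eventually (\<lambda>i. (\<integral>x. norm (f x - s i x) \<partial>\<mu>) < e) sequentially"
      using e by (rule order_tendstoD(2))
    then obtain N where "\<forall>n\<ge>N. (\<integral>x. norm (f x - s n x) \<partial>\<mu>) < e"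
      unfolding eventually_sequentially by blast
    then have "(\<integral>x. norm (f x - s N x) \<partial>\<mu>) < e" by blast
    then obtain i where "(\<integral>x. norm (f x - s i x) \<partial>\<mu>) < e" by blast
    then show "\<exists>s. integrable \<mu> s \<and> TC1 s \<and> (\<integral>x. norm (f x - s x) \<partial>\<mu>) \<le> e"
      using si ti by (intro exI[of _ "s i"]) auto
  qed
qed

end

lemma amgm_real:
  fixes a b s :: real
  assumes s: "s > 0"
  shows "a * b \<le> s / 2 * a\<^sup>2 + 1 / (2 * s) * b\<^sup>2"
proof -
  have eq: "s / 2 * a\<^sup>2 + 1 / (2 * s) * b\<^sup>2 - a * b = (s * a - b)\<^sup>2 / (2 * s)"
    using s by (simp add: field_simps power2_eq_square)
  have "0 \<le> (s * a - b)\<^sup>2 / (2 * s)" using s by simp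
  then show ?thesis using eq by linarith
qed

context haar_setting
begin

lemma conv_cont_bdd:
  fixes b g :: "'a \<Rightarrow> complex"
  assumes bm: "b \<in> borel_measurable \<mu>" and bb: "\<And>z. cmod (b z) \<le> M" and gi: "integrable \<mu> g"
  shows "continuous_on UNIV (conv \<mu> b g)"
proof (rule contI_open)
  fix x and e :: real assume e: "e > 0"
  have M0: "0 \<le> M" using bb[of undefined] norm_ge_zero order_trans by blast
  have gx: "integrable \<mu> (\<lambda>y. g (z - y))" for z using integrable_refl_iff[of g z] gi by simp
  have bgi: "integrable \<mu> (\<lambda>y. b y * g (z - y))" for z
    using int_mult_bounded[OF gx bm bb, of z] by (simp add: mult.commute)
  have e': "e / (2 * (M + 1)) > 0" using e M0 by simp
  obtain V where V: "open V" "0 \<in> V" "\<And>t. t \<in> V \<Longrightarrow> (\<integral>y. norm (g (y + t) - g y) \<partial>\<mu>) \<le> e / (2 * (M + 1))"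
    using TC_int[OF gi] e' unfolding TC1_def by metis
  define U where "U = (\<lambda>x'. x' - x) -` V"
  have "open U" unfolding U_def using V(1) by (intro open_vimage) (auto intro!: continuous_intros)
  moreover have "x \<in> U" using V(2) by (simp add: U_def)
  moreover have "dist (conv \<mu> b g x') (conv \<mu> b g x) < e" if x': "x' \<in> U" for x'
  proof -
    define t where "t = x' - x"
    have t: "t \<in> V" using x' by (simp add: U_def t_def)
    have "conv \<mu> b g x' - conv \<mu> b g x = (\<integral>y. b y * (g (x' - y) - g (x - y)) \<partial>\<mu>)"
      unfolding conv_def using bgi[of x'] bgi[of x] by (simp add: right_diff_distrib)
    then have "dist (conv \<mu> b g x') (conv \<mu> b g x) \<le> (\<integral>y. cmod (b y * (g (x' - y) - g (x - y))) \<partial>\<mu>)"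
      by (simp add: dist_norm)
    also have "\<dots> \<le> (\<integral>y. M * cmod (g (x' - y) - g (x - y)) \<partial>\<mu>)"
    proof (rule Bochner_Integration.integral_mono)
      show "integrable \<mu> (\<lambda>y. cmod (b y * (g (x' - y) - g (x - y))))"
        using bgi[of x'] bgi[of x] by (simp add: right_diff_distrib)
      show "integrable \<mu> (\<lambda>y. M * cmod (g (x' - y) - g (x - y)))"
        using gx[of x'] gx[of x] by simp
      fix y show "cmod (b y * (g (x' - y) - g (x - y))) \<le> M * cmod (g (x' - y) - g (x - y))"
        using bb[of y] by (simp add: norm_mult mult_right_mono)
    qed
    also have "\<dots> = M * (\<integral>y. cmod (g (x' - y) - g (x - y)) \<partial>\<mu>)" by simp
    also have "(\<integral>y. cmod (g (x' - y) - g (x - y)) \<partial>\<mu>) = (\<integral>y. cmod (g (y + t) - g y) \<partial>\<mu>)"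
    proof -
      have "(\<integral>y. cmod (g (x' - y) - g (x - y)) \<partial>\<mu>) = (\<integral>y. (\<lambda>z. cmod (g (z + t) - g z)) (x - y) \<partial>\<mu>)"
        by (simp add: t_def algebra_simps)
      also have "\<dots> = (\<integral>y. cmod (g (y + t) - g y) \<partial>\<mu>)" by (rule integral_refl)
      finally show ?thesis .
    qed
    also have "M * (\<integral>y. cmod (g (y + t) - g y) \<partial>\<mu>) \<le> M * (e / (2 * (M + 1)))"
      by (rule mult_left_mono[OF V(3)[OF t] M0])
    also have "\<dots> < e"
    proof -
      have "M / (2 * (M + 1)) < 1" using M0 by (simp add: field_simps)
      then have "e * (M / (2 * (M + 1))) < e * 1" using e by (intro mult_strict_left_mono)
      then show ?thesis by (simp add: field_simps)
    qed
    finally show ?thesis .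
  qed
  ultimately show "\<exists>U. open U \<and> x \<in> U \<and> (\<forall>y\<in>U. dist (conv \<mu> b g y) (conv \<mu> b g x) < e)" by blast
qed

lemma L2_prod_int:
  fixes f1 f2 :: "'a \<Rightarrow> complex"
  assumes "f1 \<in> L2 \<mu>" "f2 \<in> L2 \<mu>"
  shows "integrable \<mu> (\<lambda>y. f1 y * f2 y)"
proof -
  have m: "(\<lambda>y. f1 y * f2 y) \<in> borel_measurable \<mu>"
    using L2_meas[OF assms(1)] L2_meas[OF assms(2)] by (rule borel_measurable_times)
  have i: "integrable \<mu> (\<lambda>y. (cmod (f1 y))\<^sup>2 + (cmod (f2 y))\<^sup>2)"
    using L2_sq[OF assms(1)] L2_sq[OF assms(2)] by (rule Bochner_Integration.integrable_add)
  have "norm (f1 y * f2 y) \<le> norm ((cmod (f1 y))\<^sup>2 + (cmod (f2 y))\<^sup>2)" for y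
  proof -
    have "cmod (f1 y) * cmod (f2 y) \<le> 1 / 2 * (cmod (f1 y))\<^sup>2 + 1 / (2 * 1) * (cmod (f2 y))\<^sup>2"
      by (rule amgm_real) simp
    also have "\<dots> \<le> (cmod (f1 y))\<^sup>2 + (cmod (f2 y))\<^sup>2"
      using zero_le_power2[of "cmod (f1 y)"] zero_le_power2[of "cmod (f2 y)"] by (simp; linarith)
    finally show ?thesis by (simp add: norm_mult)
  qed
  then show ?thesis using Bochner_Integration.integrable_bound[OF i m] by simp
qed

lemma amgm_int:
  fixes f1 f2 :: "'a \<Rightarrow> complex"
  assumes f1: "f1 \<in> L2 \<mu>" and f2: "f2 \<in> L2 \<mu>" and s: "s > 0"
  shows "cmod (\<integral>y. f1 y * f2 y \<partial>\<mu>) \<le> s / 2 * (\<integral>y. (cmod (f1 y))\<^sup>2 \<partial>\<mu>) + 1 / (2 * s) * (\<integral>y. (cmod (f2 y))\<^sup>2 \<partial>\<mu>)"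
proof -
  have "cmod (\<integral>y. f1 y * f2 y \<partial>\<mu>) \<le> (\<integral>y. cmod (f1 y * f2 y) \<partial>\<mu>)"
    by (rule Bochner_Integration.integral_norm_bound)
  also have "\<dots> \<le> (\<integral>y. s / 2 * (cmod (f1 y))\<^sup>2 + 1 / (2 * s) * (cmod (f2 y))\<^sup>2 \<partial>\<mu>)"
  proof (rule Bochner_Integration.integral_mono)
    show "integrable \<mu> (\<lambda>y. cmod (f1 y * f2 y))" using L2_prod_int[OF f1 f2] by simp
    show "integrable \<mu> (\<lambda>y. s / 2 * (cmod (f1 y))\<^sup>2 + 1 / (2 * s) * (cmod (f2 y))\<^sup>2)"
      using L2_sq[OF f1] L2_sq[OF f2] by simp
    fix y show "cmod (f1 y * f2 y) \<le> s / 2 * (cmod (f1 y))\<^sup>2 + 1 / (2 * s) * (cmod (f2 y))\<^sup>2"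
      using amgm_real[OF s, of "cmod (f1 y)" "cmod (f2 y)"] by (simp add: norm_mult)
  qed
  also have "\<dots> = s / 2 * (\<integral>y. (cmod (f1 y))\<^sup>2 \<partial>\<mu>) + 1 / (2 * s) * (\<integral>y. (cmod (f2 y))\<^sup>2 \<partial>\<mu>)"
    using L2_sq[OF f1] L2_sq[OF f2] by simp
  finally show ?thesis .
qed

end

context haar_setting
begin

lemma conv_L2_cont:
  fixes g :: "'a \<Rightarrow> complex"
  assumes g: "g \<in> L2 \<mu>"
  shows "continuous_on UNIV (conv \<mu> g g)"
proof (rule contI_open)
  fix x and e :: real assume e: "e > 0"
  have gi: "integrable \<mu> g" by (rule L2_integrable[OF g])
  have gm: "g \<in> borel_measurable \<mu>" by (rule L2_meas[OF g])
  define G where "G = (\<integral>y. (cmod (g y))\<^sup>2 \<partial>\<mu>)"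
  have G0: "G \<ge> 0" unfolding G_def by simp
  define b where "b n y = (if cmod (g y) \<le> real n then g y else 0)" for n y
  define r where "r n y = (if cmod (g y) \<le> real n then 0 else g y)" for n y
  have bm: "b n \<in> borel_measurable \<mu>" for n unfolding b_def using gm by measurable
  have rm: "r n \<in> borel_measurable \<mu>" for n unfolding r_def using gm by measurable
  have bb: "cmod (b n y) \<le> real n" for n y by (simp add: b_def)
  have rL: "r n \<in> L2 \<mu>" for n
  proof -
    have m2: "(\<lambda>y. (cmod (r n y))\<^sup>2) \<in> borel_measurable \<mu>" using rm[of n] by measurable
    have "integrable \<mu> (\<lambda>y. (cmod (r n y))\<^sup>2)"
      by (rule Bochner_Integration.integrable_bound[OF L2_sq[OF g] m2]) (auto simp: r_def)
    then show ?thesis using rm[of n] unfolding L2_def by simp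
  qed
  have gxL: "(\<lambda>y. g (z - y)) \<in> L2 \<mu>" for z by (rule L2_refl[OF g])
  have Gz: "(\<integral>y. (cmod (g (z - y)))\<^sup>2 \<partial>\<mu>) = G" for z
    unfolding G_def by (rule integral_refl[of "\<lambda>y. (cmod (g y))\<^sup>2"])
  define R where "R n = (\<integral>y. (cmod (r n y))\<^sup>2 \<partial>\<mu>)" for n
  have Rlim: "R \<longlonglongrightarrow> 0"
  proof -
    have "(\<lambda>n. \<integral>y. (cmod (r n y))\<^sup>2 \<partial>\<mu>) \<longlonglongrightarrow> (\<integral>y. 0 \<partial>\<mu>)"
    proof (rule integral_dominated_convergence[where w="\<lambda>y. (cmod (g y))\<^sup>2"])
      show "(\<lambda>y. 0::real) \<in> borel_measurable \<mu>" by simp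
      show "(\<lambda>y. (cmod (r n y))\<^sup>2) \<in> borel_measurable \<mu>" for n using rm[of n] by measurable
      show "integrable \<mu> (\<lambda>y. (cmod (g y))\<^sup>2)" by (rule L2_sq[OF g])
      show "AE y in \<mu>. (\<lambda>n. (cmod (r n y))\<^sup>2) \<longlonglongrightarrow> 0"
      proof (rule AE_I2)
        fix y
        have "eventually (\<lambda>n. (cmod (r n y))\<^sup>2 = 0) sequentially"
        proof (rule eventually_sequentiallyI[of "nat \<lceil>cmod (g y)\<rceil>"])
          fix n assume "nat \<lceil>cmod (g y)\<rceil> \<le> n"
          then have "cmod (g y) \<le> real n" by linarith
          then show "(cmod (r n y))\<^sup>2 = 0" by (simp add: r_def)
        qed
        then show "(\<lambda>n. (cmod (r n y))\<^sup>2) \<longlonglongrightarrow> 0" by (rule tendsto_eventually)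
      qed
      show "AE y in \<mu>. norm ((cmod (r n y))\<^sup>2) \<le> (cmod (g y))\<^sup>2" for n
        by (rule AE_I2) (simp add: r_def)
    qed
    then have "(\<lambda>n. \<integral>y. (cmod (r n y))\<^sup>2 \<partial>\<mu>) \<longlonglongrightarrow> 0" by simp
    then show ?thesis unfolding R_def .
  qed
  define s where "s = 3 * (G + 1) / e"
  have s: "s > 0" using e G0 by (simp add: s_def)
  have "e / (3 * s) > 0" using e s by simp
  then have "eventually (\<lambda>n. R n < e / (3 * s)) sequentially" by (rule order_tendstoD(2)[OF Rlim])
  then obtain n where Rn: "R n < e / (3 * s)" unfolding eventually_sequentially by blast
  have tail: "cmod (conv \<mu> (r n) g z) < e / 3" for z
  proof -
    have "cmod (conv \<mu> (r n) g z) \<le> s / 2 * R n + 1 / (2 * s) * G"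
      unfolding conv_def R_def using amgm_int[OF rL gxL s, of n z] by (simp add: Gz)
    also have "\<dots> < e / 3"
    proof -
      have "s / 2 * R n < s / 2 * (e / (3 * s))" by (rule mult_strict_left_mono[OF Rn]) (use s in simp)
      also have "\<dots> = e / 6" using s by (simp add: field_simps)
      finally have 1: "s / 2 * R n < e / 6" .
      have "1 / (2 * s) * G = G * e / (6 * (G + 1))" using e G0 by (simp add: s_def field_simps)
      also have "\<dots> \<le> e / 6"
      proof -
        have "G / (G + 1) \<le> 1" using G0 by simp
        then have "e * (G / (G + 1)) \<le> e * 1" using e by (intro mult_left_mono) auto
        then have h: "G * e / (G + 1) \<le> e" by (simp add: mult.commute)
        have "G * e / (6 * (G + 1)) = (G * e / (G + 1)) / 6" by simp
        also have "\<dots> \<le> e / 6" by (rule divide_right_mono[OF h]) simp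
        finally show ?thesis .
      qed
      finally show ?thesis using 1 by simp
    qed
    finally show ?thesis .
  qed
  have split: "conv \<mu> g g z = conv \<mu> (b n) g z + conv \<mu> (r n) g z" for z
  proof -
    have i1: "integrable \<mu> (\<lambda>y. b n y * g (z - y))"
      using int_mult_bounded[OF L2_integrable[OF gxL] bm bb, of z n] by (simp add: mult.commute)
    have i2: "integrable \<mu> (\<lambda>y. r n y * g (z - y))" by (rule L2_prod_int[OF rL gxL])
    have "g y * g (z - y) = b n y * g (z - y) + r n y * g (z - y)" for y
      by (simp add: b_def r_def)
    then show ?thesis unfolding conv_def using i1 i2 by simp
  qed
  have bc: "continuous_on UNIV (conv \<mu> (b n) g)" by (rule conv_cont_bdd[OF bm bb gi])
  obtain U where U: "open U" "x \<in> U" "\<And>y. y \<in> U \<Longrightarrow> dist (conv \<mu> (b n) g y) (conv \<mu> (b n) g x) < e / 3"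
  proof -
    have o: "open (conv \<mu> (b n) g -` ball (conv \<mu> (b n) g x) (e / 3))"
      by (rule open_vimage[OF _ bc]) simp
    have xi: "x \<in> conv \<mu> (b n) g -` ball (conv \<mu> (b n) g x) (e / 3)" using e by simp
    have d: "dist (conv \<mu> (b n) g y) (conv \<mu> (b n) g x) < e / 3"
      if "y \<in> conv \<mu> (b n) g -` ball (conv \<mu> (b n) g x) (e / 3)" for y
      using that by (simp add: dist_commute)
    show ?thesis by (rule that[OF o xi d])
  qed
  have "dist (conv \<mu> g g y) (conv \<mu> g g x) < e" if y: "y \<in> U" for y
  proof -
    define a where "a = conv \<mu> (b n) g y - conv \<mu> (b n) g x"
    define c where "c = conv \<mu> (r n) g y"
    define d where "d = conv \<mu> (r n) g x"
    have "conv \<mu> g g y - conv \<mu> g g x = a + c - d"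
      unfolding a_def c_def d_def split[of y] split[of x] by simp
    then have "dist (conv \<mu> g g y) (conv \<mu> g g x) = cmod (a + c - d)" by (simp add: dist_norm)
    also have "\<dots> \<le> cmod a + cmod c + cmod d"
    proof -
      have "cmod (a + c - d) \<le> cmod (a + c) + cmod d" by (rule norm_triangle_ineq4)
      moreover have "cmod (a + c) \<le> cmod a + cmod c" by (rule norm_triangle_ineq)
      ultimately show ?thesis by linarith
    qed
    also have "\<dots> = cmod (conv \<mu> (b n) g y - conv \<mu> (b n) g x) + cmod (conv \<mu> (r n) g y) + cmod (conv \<mu> (r n) g x)"
      by (simp add: a_def c_def d_def)
    also have "\<dots> < e / 3 + e / 3 + e / 3"
      using U(3)[OF y] tail[of y] tail[of x] by (simp add: dist_norm)
    finally show ?thesis by simp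
  qed
  then show "\<exists>U. open U \<and> x \<in> U \<and> (\<forall>y\<in>U. dist (conv \<mu> g g y) (conv \<mu> g g x) < e)"
    using U(1,2) by blast
qed

end

lemma (in char_setting) exists_h: "\<exists>h. continuous_on UNIV h \<and> \<phi> h \<noteq> 0"
proof -
  obtain g where g: "g \<in> L2 \<mu>" "\<phi> g \<noteq> 0" using phi_nz by blast
  have "continuous_on UNIV (conv \<mu> g g)" by (rule conv_L2_cont[OF g(1)])
  moreover have "\<phi> (conv \<mu> g g) \<noteq> 0" using phi_mult[OF g(1) g(1)] g(2) by simp
  ultimately show ?thesis by blast
qed


lemma additive_neg:
  fixes F :: "'x::ab_group_add \<Rightarrow> 'y::ab_group_add"
  assumes "\<And>x y. F (x + y) = F x + F y"
  shows "F (- x) = - F x"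
proof -
  have "F 0 = F 0 + F 0" using assms[of 0 0] by simp
  then have "F 0 = 0" by simp
  moreover have "F (- x + x) = F (- x) + F x" by (rule assms)
  ultimately show ?thesis by (simp add: eq_neg_iff_add_eq_0)
qed

theorem mainTheorem2:
  fixes \<mu> :: "'a::{topological_ab_group_add,t2_space} measure"
    and \<phi> :: "('a \<Rightarrow> complex) \<Rightarrow> complex"
  assumes "compact (UNIV :: 'a set)"
    and "normalized_haar \<mu>"
    and "is_character \<mu> \<phi>"
  shows "ess_left_phi_contractible TYPE('x::banach) \<mu> \<phi>"
proof -
  interpret char_setting \<mu> \<phi>
    by unfold_locales (use assms in auto)
  obtain h where hc: "continuous_on UNIV h" and hn: "\<phi> h \<noteq> 0"
    using exists_h by blast
  interpret char_h \<mu> \<phi> h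
    by unfold_locales (use hc hn in auto)
  show ?thesis
    unfolding ess_left_phi_contractible_def
  proof (intro allI impI, elim conjE)
    fix sm :: "complex \<Rightarrow> 'x \<Rightarrow> 'x" and lm D
    assume cs: "complex_scalar sm" and bm: "phi_bimodule \<mu> \<phi> sm lm"
      and nu: "neo_unital \<mu> \<phi> sm lm" and cd: "continuous_derivation \<mu> \<phi> sm lm D"
    have sm1: "sm 1 x = x" for x
      using cs unfolding complex_scalar_def by (metis of_real_1 scaleR_one)
    have smneg: "sm c (- x) = - sm c x" for c x
      by (rule additive_neg) (use cs in \<open>simp add: complex_scalar_def\<close>)
    have lmneg: "f \<in> L2 \<mu> \<Longrightarrow> lm f (- x) = - lm f x" for f x
      by (rule additive_neg) (use bm in \<open>simp add: phi_bimodule_def\<close>)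
    have Dmul: "f \<in> L2 \<mu> \<Longrightarrow> g \<in> L2 \<mu> \<Longrightarrow> D (conv \<mu> f g) = lm f (D g) + sm (\<phi> g) (D f)" for f g
      using cd unfolding continuous_derivation_def by blast
    have Dsc: "f \<in> L2 \<mu> \<Longrightarrow> D (\<lambda>t. c * f t) = sm c (D f)" for f c
      using cd unfolding continuous_derivation_def by blast
    show "inner_derivation \<mu> \<phi> sm lm D"
      unfolding inner_derivation_def
    proof (intro exI ballI)
      fix f assume f: "f \<in> L2 \<mu>"
      have "D (conv \<mu> f u) = lm f (D u) + D f"
        using Dmul[OF f uL] phi_u sm1 by simp
      moreover have "D (conv \<mu> f u) = sm (\<phi> f) (D u)"
        using conv_u[OF f] Dsc[OF uL] by simp
      ultimately have "D f = sm (\<phi> f) (D u) - lm f (D u)"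
        by (metis add_diff_cancel_left')
      then show "D f = lm f (- D u) - sm (\<phi> f) (- D u)"
        by (simp add: lmneg[OF f] smneg)
    qed
  qed
qed


end
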